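(* Let $n\ge1$ and let $f\colon[0,1]^n\to\mathbb{R}$ be a Lovász extension. Then $f_L=\mathrm{Sym}(f)$ and $$\mathrm{Sym}(f)=f(\mathbf{0})+\sum_{i=1}^n I(f,i)\,\mathrm{os}_i.$$
   Context: $S_n$ is the symmetric group on $\{1,\ldots,n\}$; for $\pi\in S_n$, $[0,1]^n_\pi=\{\mathbf{x}:x_{\pi(1)}<\cdots<x_{\pi(n)}\}$. A Lovász extension is a continuous function $f\colon[0,1]^n\to\mathbb{R}$ which, on each $[0,1]^n_\pi$, coincides with the unique affine function agreeing with $f$ at the $n+1$ vertices $\mathbf{1}_{\{\pi(i),\ldots,\pi(n)\}}$ ($i=1,\ldots,n+1$), where $\mathbf{1}_S$ is the characteristic vector of $S$ and $\mathbf{0}=\mathbf{1}_\varnothing$. $S_n$ acts by $\pi(f)(x_1,\ldots,x_n)=f(x_{\pi(1)},\ldots,x_{\pi(n)})$ and $\mathrm{Sym}(f)=\frac1{n!}\sum_{\pi}\pi(f)$. For $\mathbf{x}\in[0,1]^n$, $x_{(1)}\le\cdots\le x_{(n)}$ are its coordinates in ascending order, $\mathrm{os}_i(\mathbf{x})=x_{(i)}$, with $x_{(0)}=0$, $x_{(n+1)}=1$. $f_L$ is the best least squares (in $L^2([0,1]^n)$) approximation of $f$ by functions in the span of $1,\mathrm{os}_1,\ldots,\mathrm{os}_n$. The influence index is $I(f,k)=-(n+1)(n+2)\int_{[0,1]^n}f(\mathbf{x})\,\big(x_{(k+1)}-2x_{(k)}+x_{(k-1)}\big)\,d\mathbf{x}$.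 *)

theory Defs
  imports "HOL-Analysis.Analysis" "HOL-Library.Multiset"
begin

text \<open>Points of [0,1]^n are vectors of type real^'n, with n = CARD('n) (n \<ge> 1 automatically).
  The unit cube is cbox 0 1.\<close>

definition char_vec :: "'n::finite set \<Rightarrow> real^'n" where
  "char_vec S = (\<chi> j. if j \<in> S then 1 else 0)"

text \<open>A permutation of the coordinates, written as an enumeration
  sigma : {1..n} -> 'n (sigma i plays the role of pi(i)); the region [0,1]^n_pi.\<close>
definition perm_region :: "(nat \<Rightarrow> 'n::finite) \<Rightarrow> (real^'n) set" where
  "perm_region \<sigma> = {x \<in> cbox 0 1. \<forall>i j. 1 \<le> i \<longrightarrow> i < j \<longrightarrow> j \<le> CARD('n) \<longrightarrow> x $ \<sigma> i < x $ \<sigma> j}"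

definition lovasz_extension :: "(real^'n::finite \<Rightarrow> real) \<Rightarrow> bool" where
  "lovasz_extension f \<longleftrightarrow> continuous_on (cbox 0 1) f \<and>
     (\<forall>\<sigma>. bij_betw \<sigma> {1..CARD('n)} (UNIV :: 'n set) \<longrightarrow>
        (\<exists>(a::real^'n) (c::real).
           (\<forall>i\<in>{1..CARD('n)+1}. c + a \<bullet> char_vec (\<sigma> ` {i..CARD('n)}) = f (char_vec (\<sigma> ` {i..CARD('n)}))) \<and>
           (\<forall>x\<in>perm_region \<sigma>. f x = c + a \<bullet> x)))"

definition Sym :: "(real^'n::finite \<Rightarrow> real) \<Rightarrow> real^'n \<Rightarrow> real" where
  "Sym f x = (1 / fact CARD('n)) * (\<Sum>\<pi>\<in>{\<pi>. \<pi> permutes (UNIV :: 'n set)}. f (\<chi> i. x $ \<pi> i))"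

definition os :: "real^'n::finite \<Rightarrow> nat \<Rightarrow> real" where
  "os x i = (if i = 0 then 0
             else if i \<le> CARD('n) then
               sorted_list_of_multiset (image_mset (\<lambda>j. x $ j) (mset_set (UNIV :: 'n set))) ! (i - 1)
             else 1)"

definition os_span :: "(real^'n::finite \<Rightarrow> real) set" where
  "os_span = {g. \<exists>c::nat \<Rightarrow> real. g = (\<lambda>x. c 0 + (\<Sum>i=1..CARD('n). c i * os x i))}"

definition L2_dist_sq :: "(real^'n::finite \<Rightarrow> real) \<Rightarrow> (real^'n \<Rightarrow> real) \<Rightarrow> real" where
  "L2_dist_sq f g = integral (cbox 0 1) (\<lambda>x. (f x - g x)^2)"

definition f_L :: "(real^'n::finite \<Rightarrow> real) \<Rightarrow> real^'n \<Rightarrow> real" where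
  "f_L f = (THE g. g \<in> os_span \<and> (\<forall>h\<in>os_span. L2_dist_sq f g \<le> L2_dist_sq f h))"

definition influence :: "(real^'n::finite \<Rightarrow> real) \<Rightarrow> nat \<Rightarrow> real" where
  "influence f k = - (real CARD('n) + 1) * (real CARD('n) + 2) *
     integral (cbox 0 1) (\<lambda>x. f x * (os x (k+1) - 2 * os x k + os x (k-1)))"

end

theory Submission
  imports Defs "HOL-Combinatorics.List_Permutation"
begin


lemma sorted_nth_le_iff:
  fixes xs :: "real list"
  assumes "sorted xs" "j < length xs"
  shows "xs!j \<le> t \<longleftrightarrow> j < length (filter (\<lambda>v. v \<le> t) xs)"
  using assms
proof (induction xs arbitrary: j)
  case Nil then show ?case by simp
next
  case (Cons a xs)
  show ?case
  proof (cases j)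
    case 0
    show ?thesis
    proof (cases "a \<le> t")
      case True then show ?thesis using 0 by simp
    next
      case False
      then have "filter (\<lambda>v. v \<le> t) xs = []" using Cons.prems by (auto simp: filter_empty_conv)
      then show ?thesis using 0 False by simp
    qed
  next
    case (Suc j')
    have IH: "xs!j' \<le> t \<longleftrightarrow> j' < length (filter (\<lambda>v. v \<le> t) xs)"
      using Cons Suc by auto
    show ?thesis
    proof (cases "a \<le> t")
      case True then show ?thesis using Suc IH by simp
    next
      case False
      then have "filter (\<lambda>v. v \<le> t) xs = []" using Cons.prems by (auto simp: filter_empty_conv)
      moreover have "a \<le> xs!j'" using Cons.prems Suc by (auto simp: nth_mem)
      ultimately show ?thesis using Suc False by simp
    qed
  qed
qed

lemma sorted_nth_lt_iff:
  fixes xs :: "real list"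
  assumes "sorted xs" "j < length xs"
  shows "xs!j < t \<longleftrightarrow> j < length (filter (\<lambda>v. v < t) xs)"
  using assms
proof (induction xs arbitrary: j)
  case Nil then show ?case by simp
next
  case (Cons a xs)
  show ?case
  proof (cases j)
    case 0
    show ?thesis
    proof (cases "a < t")
      case True then show ?thesis using 0 by simp
    next
      case False
      then have "filter (\<lambda>v. v < t) xs = []" using Cons.prems by (auto simp: filter_empty_conv)
      then show ?thesis using 0 False by simp
    qed
  next
    case (Suc j')
    have IH: "xs!j' < t \<longleftrightarrow> j' < length (filter (\<lambda>v. v < t) xs)"
      using Cons Suc by auto
    show ?thesis
    proof (cases "a < t")
      case True then show ?thesis using Suc IH by simp
    next
      case False
      then have "filter (\<lambda>v. v < t) xs = []" using Cons.prems by (auto simp: filter_empty_conv)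
      moreover have "a \<le> xs!j'" using Cons.prems Suc by (auto simp: nth_mem)
      ultimately show ?thesis using Suc False by simp
    qed
  qed
qed

definition osl :: "real^'n::finite \<Rightarrow> real list" where
  "osl x = sorted_list_of_multiset (image_mset (\<lambda>j. x $ j) (mset_set (UNIV :: 'n set)))"

lemma osl_props:
  "sorted (osl x)" "length (osl x) = CARD('n::finite)"
  "mset (osl (x::real^'n)) = image_mset (\<lambda>j. x $ j) (mset_set UNIV)"
proof -
  show "sorted (osl x)" "mset (osl (x::real^'n)) = image_mset (\<lambda>j. x $ j) (mset_set UNIV)"
    by (auto simp: osl_def)
  have "length (osl x) = size (mset (osl x))" by simp
  also have "\<dots> = CARD('n)" by (simp add: osl_def)
  finally show "length (osl x) = CARD('n::finite)" .
qed

lemma os_eq_osl: "1 \<le> i \<Longrightarrow> i \<le> CARD('n::finite) \<Longrightarrow> os (x::real^'n) i = osl x ! (i - 1)"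
  by (simp add: os_def osl_def)

lemma length_filter_osl: "length (filter P (osl (x::real^'n::finite))) = card {a. P (x$a)}"
proof -
  have "length (filter P (osl x)) = size (mset (filter P (osl x)))" by (metis size_mset)
  also have "\<dots> = size (filter_mset P (image_mset (\<lambda>j. x $ j) (mset_set (UNIV::'n set))))"
    by (simp add: osl_def)
  also have "\<dots> = card {a. P (x$a)}"
    by (simp add: filter_mset_image_mset)
  finally show ?thesis .
qed

lemma card_pos_n: "0 < CARD('n::finite)" by simp

lemma os_le_iff:
  assumes "1 \<le> i" "i \<le> CARD('n::finite)"
  shows "os (x::real^'n) i \<le> t \<longleftrightarrow> i \<le> card {a. x$a \<le> t}"
proof -
  have "os x i \<le> t \<longleftrightarrow> i - 1 < length (filter (\<lambda>v. v \<le> t) (osl x))"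
    using assms by (simp add: os_eq_osl sorted_nth_le_iff osl_props)
  then show ?thesis using assms by (simp add: length_filter_osl, arith)
qed

lemma os_lt_iff:
  assumes "1 \<le> i" "i \<le> CARD('n::finite)"
  shows "os (x::real^'n) i < t \<longleftrightarrow> i \<le> card {a. x$a < t}"
proof -
  have "os x i < t \<longleftrightarrow> i - 1 < length (filter (\<lambda>v. v < t) (osl x))"
    using assms by (simp add: os_eq_osl sorted_nth_lt_iff osl_props)
  then show ?thesis using assms by (simp add: length_filter_osl, arith)
qed

abbreviation (input) cube :: "(real^'n::finite) set" where "cube \<equiv> cbox 0 1"

lemma in_cube: "x \<in> cube \<longleftrightarrow> (\<forall>a. 0 \<le> x$a \<and> x$a \<le> 1)"
  by (auto simp: mem_box_cart)

lemma os_0[simp]: "os x 0 = 0" and os_top[simp]: "os (x::real^'n::finite) (CARD('n) + 1) = 1"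
  and os_top'[simp]: "os (x::real^'n::finite) (Suc CARD('n)) = 1"
  by (simp_all add: os_def)

lemma os_unique: "(\<And>t. (u::real) \<le> t \<longleftrightarrow> v \<le> t) \<Longrightarrow> u = v"
  by (metis order.antisym order.refl)

lemma os_bounds:
  assumes "x \<in> cube"
  shows "0 \<le> os (x::real^'n::finite) i" "os x i \<le> 1"
proof -
  have A: "\<forall>a. 0 \<le> x$a \<and> x$a \<le> 1" using assms in_cube by blast
  show "0 \<le> os x i"
  proof (cases "1 \<le> i \<and> i \<le> CARD('n)")
    case True
    have "{a. x$a < 0} = {}" using A by (simp add: Collect_empty_eq not_less)
    then have "\<not> os x i < 0" using True by (subst os_lt_iff) auto
    then show ?thesis by simp
  qed (auto simp: os_def)
  show "os x i \<le> 1"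
  proof (cases "1 \<le> i \<and> i \<le> CARD('n)")
    case True
    have "{a. x$a \<le> 1} = UNIV" using A by force
    then show ?thesis using True by (subst os_le_iff) auto
  qed (auto simp: os_def)
qed

lemma os_mono:
  assumes "x \<in> cube" "i \<le> j" "j \<le> CARD('n) + 1"
  shows "os (x::real^'n::finite) i \<le> os x j"
proof -
  consider "i = 0" | "j = CARD('n) + 1" | "1 \<le> i" "j \<le> CARD('n)" using assms by linarith
  then show ?thesis
  proof cases
    case 1 then show ?thesis using os_bounds[OF assms(1)] by simp
  next
    case 2 then show ?thesis using os_bounds[OF assms(1)] by simp
  next
    case 3
    have "j \<le> card {a. x$a \<le> os x j}" using 3 assms by (subst os_le_iff[symmetric]) auto
    then have "i \<le> card {a. x$a \<le> os x j}" using assms by linarith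
    then show ?thesis using 3 assms by (subst os_le_iff) auto
  qed
qed

lemma os_lipschitz:
  "\<bar>os (x::real^'n::finite) i - os y i\<bar> \<le> norm (x - y)"
proof (cases "1 \<le> i \<and> i \<le> CARD('n)")
  case True
  have *: "os y i \<le> os x i + norm (x - y)" for x y :: "real^'n"
  proof -
    have "{a. x$a \<le> os x i} \<subseteq> {a. y$a \<le> os x i + norm (x - y)}"
    proof
      fix a assume "a \<in> {a. x$a \<le> os x i}"
      moreover have "\<bar>(x - y)$a\<bar> \<le> norm (x - y)" by (rule component_le_norm_cart)
      ultimately show "a \<in> {a. y$a \<le> os x i + norm (x - y)}" by auto
    qed
    moreover have "i \<le> card {a. x$a \<le> os x i}" using True by (subst os_le_iff[symmetric]) auto
    ultimately have "i \<le> card {a. y$a \<le> os x i + norm (x - y)}"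
      by (meson card_mono finite order_trans)
    then show ?thesis using True by (subst os_le_iff) auto
  qed
  show ?thesis using *[of x y] *[of y x] by (auto simp: norm_minus_commute)
qed (auto simp: os_def)

lemma os_continuous: "continuous_on UNIV (\<lambda>x::real^'n::finite. os x i)"
proof -
  have "uniformly_continuous_on UNIV (\<lambda>x::real^'n::finite. os x i)"
    unfolding uniformly_continuous_on_def
  proof (intro allI impI)
    fix e :: real assume "0 < e"
    show "\<exists>d>0. \<forall>x\<in>UNIV. \<forall>x'\<in>UNIV. dist x' x < d \<longrightarrow> dist (os x' i) (os x i) < e"
      using \<open>0 < e\<close> os_lipschitz by (intro exI[of _ e]) (auto simp: dist_norm intro: le_less_trans)
  qed
  then show ?thesis by (rule uniformly_continuous_imp_continuous)
qed

lemma os_continuous_on[continuous_intros]: "continuous_on S (\<lambda>x::real^'n::finite. os x i)"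
  using os_continuous continuous_on_subset by blast

lemma os_perm:
  assumes "\<pi> permutes (UNIV::'n::finite set)"
  shows "os (\<chi> a. (x::real^'n) $ \<pi> a) i = os x i"
proof (cases "1 \<le> i \<and> i \<le> CARD('n)")
  case True
  have c: "card {a. x $ \<pi> a \<le> t} = card {a. x$a \<le> t}" for t
  proof -
    have "{a. x $ \<pi> a \<le> t} = inv \<pi> ` {a. x$a \<le> t}"
      using assms by (auto simp: permutes_inverses image_iff) (metis permutes_inverses(2))
    moreover have "inj (inv \<pi>)" using assms by (meson permutes_inj permutes_inv)
    ultimately show ?thesis by (simp add: card_image inj_on_subset)
  qed
  show ?thesis
    by (rule os_unique) (use True c in \<open>simp add: os_le_iff\<close>)
qed (auto simp: os_def)

lemma os_sum:
  "(\<Sum>i=1..CARD('n::finite). g (os (x::real^'n) i)) = (\<Sum>a\<in>UNIV. g (x$a))"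
proof -
  have "(\<Sum>i=1..CARD('n). g (os x i)) = (\<Sum>j<CARD('n). g (osl x ! j))"
    by (rule sum.reindex_bij_witness[of _ "\<lambda>j. j + 1" "\<lambda>i. i - 1"]) (auto simp: os_eq_osl)
  also have "\<dots> = sum_list (map g (osl x))"
    by (simp add: sum_list_sum_nth osl_props atLeast0LessThan)
  also have "\<dots> = sum_mset (image_mset g (mset (osl x)))"
    by (metis mset_map sum_mset_sum_list)
  also have "\<dots> = (\<Sum>a\<in>UNIV. g (x$a))"
    by (simp add: osl_props image_mset.compositionality sum_unfold_sum_mset o_def)
  finally show ?thesis .
qed

lemma os_sorting:
  obtains \<sigma> where "bij_betw \<sigma> {1..CARD('n::finite)} (UNIV::'n set)"
    "\<And>i. i \<in> {1..CARD('n)} \<Longrightarrow> (x::real^'n) $ \<sigma> i = os x i"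
proof -
  obtain es :: "'n list" where es: "set es = UNIV" "distinct es"
    using finite_distinct_list[of "UNIV::'n set"] by auto
  have len: "length es = CARD('n)" using es by (metis distinct_card)
  have "mset (osl x) = mset (map (\<lambda>a. x$a) es)"
    using es by (simp add: osl_props mset_set_set[symmetric])
  then obtain f where f: "bij_betw f {..<length (osl x)} {..<length (map (\<lambda>a. x$a) es)}"
    "\<forall>i<length (osl x). osl x ! i = map (\<lambda>a. x$a) es ! (f i)"
    using permutation_Ex_bij by blast
  define \<sigma> where "\<sigma> i = es ! f (i - 1)" for i
  have b1: "bij_betw (\<lambda>i. i - 1) {1..CARD('n)} {..<CARD('n)}"
    by (rule bij_betw_byWitness[of _ "\<lambda>i. i + 1"]) auto
  have b2: "bij_betw f {..<CARD('n)} {..<CARD('n)}" using f len by (simp add: osl_props)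
  have b3: "bij_betw (\<lambda>j. es ! j) {..<CARD('n)} UNIV"
    using es len by (metis atLeast0LessThan bij_betw_nth lessThan_atLeast0)
  have "bij_betw \<sigma> {1..CARD('n)} UNIV"
    unfolding \<sigma>_def using bij_betw_trans[OF bij_betw_trans[OF b1 b2] b3] by (simp add: o_def)
  moreover have "x $ \<sigma> i = os x i" if "i \<in> {1..CARD('n)}" for i
  proof -
    have "f (i - 1) < CARD('n)" using b2 that by (auto simp: bij_betw_def)
    then show ?thesis
      using that f b2 len unfolding \<sigma>_def by (auto simp: os_eq_osl osl_props)
  qed
  ultimately show ?thesis using that by blast
qed


lemma char_vec_empty[simp]: "char_vec {} = 0"
  by (simp add: char_vec_def vec_eq_iff)

lemma inner_char_vec: "a \<bullet> char_vec S = (\<Sum>j\<in>S. a $ j)"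
proof -
  have "a \<bullet> char_vec S = (\<Sum>j\<in>UNIV. a$j * (if j \<in> S then 1 else 0))"
    by (simp add: inner_vec_def char_vec_def)
  also have "\<dots> = (\<Sum>j\<in>S. a $ j)"
    by (simp add: sum.If_cases if_distrib)
  finally show ?thesis .
qed

lemma lovasz_perm_region:
  fixes f :: "real^'n::finite \<Rightarrow> real"
  assumes "lovasz_extension f" "bij_betw \<sigma> {1..CARD('n)} (UNIV::'n set)"
  shows "\<forall>y\<in>perm_region \<sigma>. f y = f 0 + (\<Sum>i=1..CARD('n). y $ \<sigma> i *
            (f (char_vec (\<sigma> ` {i..CARD('n)})) - f (char_vec (\<sigma> ` {Suc i..CARD('n)}))))"
proof -
  let ?n = "CARD('n)"
  let ?v = "\<lambda>i. char_vec (\<sigma> ` {i..?n})"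
  obtain a c where vert: "\<forall>i\<in>{1..?n+1}. c + a \<bullet> ?v i = f (?v i)"
    and reg: "\<forall>x\<in>perm_region \<sigma>. f x = c + a \<bullet> x"
  proof -
    have L: "\<forall>\<sigma>. bij_betw \<sigma> {1..CARD('n)} (UNIV :: 'n set) \<longrightarrow>
        (\<exists>(a::real^'n) (c::real).
           (\<forall>i\<in>{1..CARD('n)+1}. c + a \<bullet> char_vec (\<sigma> ` {i..CARD('n)}) = f (char_vec (\<sigma> ` {i..CARD('n)}))) \<and>
           (\<forall>x\<in>perm_region \<sigma>. f x = c + a \<bullet> x))"
      using assms(1) unfolding lovasz_extension_def by (rule conjunct2)
    from L[rule_format, OF assms(2)] obtain a c where
      "\<forall>i\<in>{1..CARD('n)+1}. c + a \<bullet> char_vec (\<sigma> ` {i..CARD('n)}) = f (char_vec (\<sigma> ` {i..CARD('n)}))"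
      "\<forall>x\<in>perm_region \<sigma>. f x = c + a \<bullet> x" by blast
    then show ?thesis by (rule that)
  qed
  have c: "c = f 0" using vert[rule_format, of "?n+1"] by simp
  have inj: "inj_on \<sigma> {1..?n}" using assms(2) by (simp add: bij_betw_def)
  have aa: "a $ \<sigma> i = f (?v i) - f (?v (Suc i))" if "i \<in> {1..?n}" for i
  proof -
    have "{i..?n} = insert i {Suc i..?n}" using that by (simp add: atLeastAtMost_insertL)
    then have "\<sigma> ` {i..?n} = insert (\<sigma> i) (\<sigma> ` {Suc i..?n})" by simp
    moreover have "\<sigma> i \<notin> \<sigma> ` {Suc i..?n}"
    proof
      assume "\<sigma> i \<in> \<sigma> ` {Suc i..?n}"
      then obtain j where j: "j \<in> {Suc i..?n}" "\<sigma> i = \<sigma> j" by blast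
      then have "i = j" using inj that by (intro inj_onD[OF inj]) auto
      then show False using j by simp
    qed
    ultimately have "a \<bullet> ?v i = a $ \<sigma> i + a \<bullet> ?v (Suc i)" by (simp add: inner_char_vec)
    moreover have "c + a \<bullet> ?v i = f (?v i)" using vert that by simp
    moreover have "c + a \<bullet> ?v (Suc i) = f (?v (Suc i))"
      using vert that by simp
    ultimately show ?thesis by linarith
  qed
  show ?thesis
  proof
    fix y assume y: "y \<in> perm_region \<sigma>"
    have "a \<bullet> y = (\<Sum>j\<in>UNIV. a$j * y$j)" by (simp add: inner_vec_def)
    also have "\<dots> = (\<Sum>i=1..?n. a$(\<sigma> i) * y$(\<sigma> i))"
      using sum.reindex_bij_betw[OF assms(2), of "\<lambda>j. a$j * y$j"] by simp
    also have "\<dots> = (\<Sum>i=1..?n. y $ \<sigma> i * (f (?v i) - f (?v (Suc i))))"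
      by (rule sum.cong) (auto simp: aa)
    finally show "f y = f 0 + (\<Sum>i=1..?n. y $ \<sigma> i * (f (?v i) - f (?v (Suc i))))"
      using reg y c by simp
  qed
qed

lemma lovasz_sorted:
  fixes f :: "real^'n::finite \<Rightarrow> real"
  assumes lov: "lovasz_extension f" and bij: "bij_betw \<sigma> {1..CARD('n)} (UNIV::'n set)"
    and x: "x \<in> cube"
    and srt: "\<And>i j. 1 \<le> i \<Longrightarrow> i \<le> j \<Longrightarrow> j \<le> CARD('n) \<Longrightarrow> x $ \<sigma> i \<le> x $ \<sigma> j"
  shows "f x = f 0 + (\<Sum>i=1..CARD('n). x $ \<sigma> i *
            (f (char_vec (\<sigma> ` {i..CARD('n)})) - f (char_vec (\<sigma> ` {Suc i..CARD('n)}))))"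
proof -
  let ?n = "CARD('n)"
  define R where "R y = f 0 + (\<Sum>i=1..?n. y $ \<sigma> i *
            (f (char_vec (\<sigma> ` {i..?n})) - f (char_vec (\<sigma> ` {Suc i..?n}))))" for y :: "real^'n"
  have onreg: "\<forall>y\<in>perm_region \<sigma>. f y = R y"
    using lovasz_perm_region[OF lov bij] unfolding R_def by blast
  define w :: "real^'n" where "w = (\<chi> a. real (inv_into {1..?n} \<sigma> a) / real (?n + 1))"
  have wsig: "w $ \<sigma> i = real i / real (?n + 1)" if "i \<in> {1..?n}" for i
    using bij that by (simp add: w_def bij_betw_inv_into_left)
  have wcube: "0 \<le> w$a \<and> w$a \<le> 1" for a
  proof -
    have "inv_into {1..?n} \<sigma> a \<in> {1..?n}" using bij by (metis UNIV_I bij_betw_def inv_into_into)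
    then show ?thesis by (simp add: w_def)
  qed
  define y where "y e = (1 - e) *\<^sub>R x + e *\<^sub>R w" for e :: real
  have yreg: "y e \<in> perm_region \<sigma>" if e: "0 < e" "e < 1" for e
    unfolding perm_region_def
  proof (intro CollectI conjI allI impI)
    show "y e \<in> cube" unfolding in_cube
    proof
      fix a
      have "0 \<le> x$a" "x$a \<le> 1" using x in_cube by blast+
      moreover have "0 \<le> w$a" "w$a \<le> 1" using wcube by blast+
      ultimately show "0 \<le> y e $ a \<and> y e $ a \<le> 1" using e unfolding y_def
        by (simp add: convex_bound_le add_nonneg_nonneg)
    qed
    fix i j assume ij: "1 \<le> i" "i < j" "j \<le> ?n"
    have "(1 - e) * x $ \<sigma> i \<le> (1 - e) * x $ \<sigma> j" using srt[of i j] ij e by simp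
    moreover have "e * w $ \<sigma> i < e * w $ \<sigma> j" using ij e
      by (simp add: wsig divide_strict_right_mono)
    ultimately show "y e $ \<sigma> i < y e $ \<sigma> j" unfolding y_def by simp
  qed
  have ylim: "(y \<longlongrightarrow> x) (at_right 0)"
  proof -
    have "((\<lambda>e. (1 - e) *\<^sub>R x + e *\<^sub>R w) \<longlongrightarrow> (1 - 0) *\<^sub>R x + 0 *\<^sub>R w) (at_right 0)"
      by (intro tendsto_intros)
    then show ?thesis by (simp add: y_def[abs_def])
  qed
  have ev: "\<forall>\<^sub>F e in at_right 0. y e \<in> perm_region \<sigma>"
    using yreg eventually_at_right_real[of 0 1] by (auto elim: eventually_mono)
  have contf: "continuous_on cube f" using lov by (simp add: lovasz_extension_def)
  have l1: "((\<lambda>e. f (y e)) \<longlongrightarrow> f x) (at_right 0)"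
  proof (rule continuous_on_tendsto_compose[OF contf ylim x])
    show "\<forall>\<^sub>F e in at_right 0. y e \<in> cube"
      using ev by (rule eventually_mono) (simp add: perm_region_def)
  qed
  have contR: "continuous_on UNIV R" unfolding R_def by (intro continuous_intros)
  have l2: "((\<lambda>e. R (y e)) \<longlongrightarrow> R x) (at_right 0)"
    using continuous_on_tendsto_compose[OF contR ylim] by simp
  have "\<forall>\<^sub>F e in at_right 0. R (y e) = f (y e)"
    using ev by (rule eventually_mono) (simp add: onreg)
  then have l3: "((\<lambda>e. f (y e)) \<longlongrightarrow> R x) (at_right 0)"
    by (rule Lim_transform_eventually[OF l2])
  have "f x = R x" using tendsto_unique[OF _ l1 l3] by simp
  then show ?thesis by (simp add: R_def)
qed

definition Dl :: "(real^'n::finite \<Rightarrow> real) \<Rightarrow> (nat \<Rightarrow> 'n) \<Rightarrow> nat \<Rightarrow> real" where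
  "Dl f \<sigma> i = f (char_vec (\<sigma> ` {i..CARD('n)})) - f (char_vec (\<sigma> ` {Suc i..CARD('n)}))"

lemma lovasz_os:
  fixes f :: "real^'n::finite \<Rightarrow> real"
  assumes lov: "lovasz_extension f" and bij: "bij_betw \<sigma> {1..CARD('n)} (UNIV::'n set)"
    and x: "x \<in> cube" and srt: "\<And>i. i \<in> {1..CARD('n)} \<Longrightarrow> x $ \<sigma> i = os x i"
  shows "f x = f 0 + (\<Sum>i=1..CARD('n). os x i * Dl f \<sigma> i)"
proof -
  have "f x = f 0 + (\<Sum>i=1..CARD('n). x $ \<sigma> i * Dl f \<sigma> i)"
    unfolding Dl_def
  proof (rule lovasz_sorted[OF lov bij x])
    fix i j assume "1 \<le> i" "i \<le> j" "j \<le> CARD('n)"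
    then show "x $ \<sigma> i \<le> x $ \<sigma> j" using srt[of i] srt[of j] os_mono[OF x, of i j] by simp
  qed
  also have "\<dots> = f 0 + (\<Sum>i=1..CARD('n). os x i * Dl f \<sigma> i)"
    using srt by simp
  finally show ?thesis .
qed

lemma perm_vec_cube:
  assumes "\<pi> permutes (UNIV::'n::finite set)" "x \<in> cube"
  shows "(\<chi> a. (x::real^'n) $ \<pi> a) \<in> cube"
  using assms(2) by (simp add: in_cube)

lemma Sym_formula:
  fixes f :: "real^'n::finite \<Rightarrow> real"
  assumes lov: "lovasz_extension f"
  shows "\<exists>d. \<forall>x\<in>cube. Sym f x = f 0 + (\<Sum>i=1..CARD('n). d i * os x i)"
proof -
  let ?n = "CARD('n)"
  let ?P = "{\<pi>. \<pi> permutes (UNIV::'n set)}"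
  obtain e where e: "bij_betw e {1..?n} (UNIV::'n set)"
    using os_sorting[of "0::real^'n"] by blast
  define d where "d i = (1 / fact ?n) * (\<Sum>\<pi>\<in>?P. Dl f (\<pi> \<circ> e) i)" for i
  have cardP: "card ?P = fact ?n" by (rule card_permutations) auto
  show ?thesis
  proof (intro exI ballI)
    fix x :: "real^'n" assume x: "x \<in> cube"
    obtain \<sigma> where \<sigma>: "bij_betw \<sigma> {1..?n} (UNIV::'n set)" "\<And>i. i \<in> {1..?n} \<Longrightarrow> x $ \<sigma> i = os x i"
      using os_sorting by blast
    define \<rho> where "\<rho> = \<sigma> \<circ> inv_into {1..?n} e"
    have \<rho>: "\<rho> permutes (UNIV::'n set)"
    proof -
      have "bij_betw (inv_into {1..?n} e) UNIV {1..?n}" using e by (rule bij_betw_inv_into)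
      then have "bij_betw \<rho> UNIV UNIV" unfolding \<rho>_def using \<sigma>(1) by (rule bij_betw_trans)
      then show ?thesis by (rule bij_imp_permutes) auto
    qed
    have \<rho>e: "\<rho> (e i) = \<sigma> i" if "i \<in> {1..?n}" for i
      using e that by (simp add: \<rho>_def bij_betw_inv_into_left)
    have fy: "f (\<chi> a. x $ inv \<pi> a) = f 0 + (\<Sum>i=1..?n. os x i * Dl f (\<pi> \<circ> \<sigma>) i)"
      if \<pi>: "\<pi> permutes (UNIV::'n set)" for \<pi>
    proof -
      let ?y = "\<chi> a. x $ inv \<pi> a"
      have "inv \<pi> permutes (UNIV::'n set)" using \<pi> by (rule permutes_inv)
      then have ycube: "?y \<in> cube" using x by (rule perm_vec_cube)
      have bij': "bij_betw (\<pi> \<circ> \<sigma>) {1..?n} (UNIV::'n set)"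
        using \<sigma>(1) permutes_imp_bij[OF \<pi>] by (rule bij_betw_trans)
      have "?y $ (\<pi> \<circ> \<sigma>) i = os ?y i" if "i \<in> {1..?n}" for i
      proof -
        have "?y $ (\<pi> \<circ> \<sigma>) i = x $ \<sigma> i" using \<pi> by (simp add: permutes_inverses)
        also have "\<dots> = os x i" using \<sigma>(2) that by simp
        also have "\<dots> = os ?y i" using os_perm[OF \<open>inv \<pi> permutes UNIV\<close>, of x] by simp
        finally show ?thesis .
      qed
      from lovasz_os[OF lov bij' ycube this] show ?thesis
        using os_perm[OF \<open>inv \<pi> permutes UNIV\<close>, of x] by (simp add: o_def)
    qed
    have Dl_eq: "Dl f (\<pi> \<circ> \<rho> \<circ> e) i = Dl f (\<pi> \<circ> \<sigma>) i" if "1 \<le> i" for \<pi> i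
    proof -
      have "(\<pi> \<circ> \<rho> \<circ> e) ` {j..?n} = (\<pi> \<circ> \<sigma>) ` {j..?n}" if "1 \<le> j" for j
        using \<rho>e that by (auto simp: image_iff)
      from this[of i] this[of "Suc i"] that show ?thesis by (simp add: Dl_def)
    qed
    have "Sym f x = (1 / fact ?n) * (\<Sum>\<pi>\<in>?P. f (\<chi> a. x $ inv \<pi> a))"
      unfolding Sym_def by (subst sum_permutations_inverse) simp
    also have "\<dots> = (1 / fact ?n) * (\<Sum>\<pi>\<in>?P. f 0 + (\<Sum>i=1..?n. os x i * Dl f (\<pi> \<circ> \<sigma>) i))"
      using fy by simp
    also have "\<dots> = f 0 + (1 / fact ?n) * (\<Sum>\<pi>\<in>?P. (\<Sum>i=1..?n. os x i * Dl f (\<pi> \<circ> \<sigma>) i))"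
      using cardP by (simp add: sum.distrib field_simps)
    also have "(\<Sum>\<pi>\<in>?P. (\<Sum>i=1..?n. os x i * Dl f (\<pi> \<circ> \<sigma>) i)) =
        (\<Sum>i=1..?n. os x i * (\<Sum>\<pi>\<in>?P. Dl f (\<pi> \<circ> \<sigma>) i))"
      by (simp add: sum.swap[of _ ?P] sum_distrib_left)
    also have "f 0 + (1 / fact ?n) * (\<Sum>i=1..?n. os x i * (\<Sum>\<pi>\<in>?P. Dl f (\<pi> \<circ> \<sigma>) i)) =
        f 0 + (\<Sum>i=1..?n. os x i * ((1 / fact ?n) * (\<Sum>\<pi>\<in>?P. Dl f (\<pi> \<circ> \<sigma>) i)))"
      by (simp add: sum_distrib_left mult.left_commute)
    also have "\<dots> = f 0 + (\<Sum>i=1..?n. d i * os x i)"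
    proof -
      have "(\<Sum>\<pi>\<in>?P. Dl f (\<pi> \<circ> \<sigma>) i) = (\<Sum>\<pi>\<in>?P. Dl f (\<pi> \<circ> e) i)" if "1 \<le> i" for i
        using sum_permutations_compose_right[OF \<rho>, of "\<lambda>\<pi>. Dl f (\<pi> \<circ> e) i"] Dl_eq[OF that]
        by (simp add: o_assoc)
      then show ?thesis by (intro arg_cong2[where f="(+)"] refl sum.cong) (auto simp: d_def mult.commute)
    qed
    finally show "Sym f x = f 0 + (\<Sum>i=1..?n. d i * os x i)" .
  qed
qed


definition pv :: "('n::finite \<Rightarrow> 'n) \<Rightarrow> real^'n \<Rightarrow> real^'n" where
  "pv \<pi> x = (\<chi> a. x $ \<pi> a)"

lemma pv_nth[simp]: "pv \<pi> x $ a = x $ \<pi> a" by (simp add: pv_def)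

lemma pv_inv:
  assumes "\<pi> permutes (UNIV::'n::finite set)"
  shows "pv (inv \<pi>) (pv \<pi> x) = x" "pv \<pi> (pv (inv \<pi>) x) = x"
  using assms by (simp_all add: vec_eq_iff permutes_inverses)

lemma pv_continuous: "continuous_on S (pv \<pi>)"
  unfolding pv_def by (intro continuous_intros)

lemma pv_cbox:
  assumes "\<pi> permutes (UNIV::'n::finite set)"
  shows "pv \<pi> ` cbox u v = cbox (pv \<pi> u) (pv \<pi> v)"
proof
  show "pv \<pi> ` cbox u v \<subseteq> cbox (pv \<pi> u) (pv \<pi> v)"
    by (auto simp: mem_box_cart)
  show "cbox (pv \<pi> u) (pv \<pi> v) \<subseteq> pv \<pi> ` cbox u v"
  proof
    fix x assume x: "x \<in> cbox (pv \<pi> u) (pv \<pi> v)"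
    have "pv (inv \<pi>) x \<in> cbox u v"
      unfolding mem_box_cart
    proof
      fix b
      have "u $ \<pi> (inv \<pi> b) \<le> x $ inv \<pi> b \<and> x $ inv \<pi> b \<le> v $ \<pi> (inv \<pi> b)"
        using x by (simp add: mem_box_cart)
      then show "u $ b \<le> pv (inv \<pi>) x $ b \<and> pv (inv \<pi>) x $ b \<le> v $ b"
        using assms by (simp add: permutes_inverses)
    qed
    then show "x \<in> pv \<pi> ` cbox u v" using pv_inv(2)[OF assms, of x] by (metis image_eqI)
  qed
qed

lemma pv_content:
  assumes "\<pi> permutes (UNIV::'n::finite set)"
  shows "measure lborel (pv \<pi> ` cbox u v) = measure lborel (cbox u v)"
proof -
  have e: "cbox (pv \<pi> u) (pv \<pi> v) = {} \<longleftrightarrow> cbox u v = {}"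
    using pv_cbox[OF assms, of u v] by auto
  have "(\<Prod>i\<in>UNIV. pv \<pi> v $ i - pv \<pi> u $ i) = (\<Prod>i\<in>UNIV. v $ i - u $ i)"
    using prod.reindex_bij_betw[OF permutes_imp_bij[OF assms], of "\<lambda>i. v $ i - u $ i"] by simp
  then show ?thesis using e by (simp add: pv_cbox[OF assms] content_cbox_if_cart)
qed

lemma has_integral_pv:
  assumes \<pi>: "\<pi> permutes (UNIV::'n::finite set)" and F: "(F has_integral I) (cube::(real^'n) set)"
  shows "((\<lambda>x. F (pv \<pi> x)) has_integral I) cube"
proof -
  have "((\<lambda>x. F (pv \<pi> x)) has_integral (1 / 1) *\<^sub>R I) (pv (inv \<pi>) ` cbox 0 1)"
  proof (rule has_integral_twiddle[where h="pv (inv \<pi>)"])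
    show "\<And>x. pv (inv \<pi>) (pv \<pi> x) = x" "\<And>x. pv \<pi> (pv (inv \<pi>) x) = x" using pv_inv[OF \<pi>] by auto
    show "\<And>x. continuous (at x) (pv \<pi>)"
      using pv_continuous[of UNIV \<pi>] by (simp add: continuous_on_eq_continuous_at)
    show "\<And>u v. \<exists>w z. pv \<pi> ` cbox u v = cbox w z" using pv_cbox[OF \<pi>] by blast
    show "\<And>u v. \<exists>w z. pv (inv \<pi>) ` cbox u v = cbox w z" using pv_cbox[OF permutes_inv[OF \<pi>]] by blast
    show "\<And>u v. measure lborel (pv \<pi> ` cbox u v) = 1 * measure lborel (cbox u v)" using pv_content[OF \<pi>] by simp
  qed (use F in auto)
  moreover have "pv (inv \<pi>) ` cbox 0 1 = (cube::(real^'n) set)"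
  proof -
    have "pv (inv \<pi>) 0 = 0" "pv (inv \<pi>) 1 = (1::real^'n)" by (simp_all add: vec_eq_iff)
    then show ?thesis using pv_cbox[OF permutes_inv[OF \<pi>], of 0 1] by simp
  qed
  ultimately show ?thesis by simp
qed

lemma integral_pv:
  assumes \<pi>: "\<pi> permutes (UNIV::'n::finite set)" and F: "F integrable_on (cube::(real^'n) set)"
  shows "integral cube (\<lambda>x. F (pv \<pi> x)) = integral cube F"
  using has_integral_pv[OF \<pi> integrable_integral[OF F]] by (rule integral_unique)


definition upd :: "real^'n::finite \<Rightarrow> 'n \<Rightarrow> real \<Rightarrow> real^'n" where
  "upd x b t = (\<chi> a. if a = b then t else x $ a)"

lemma upd_nth: "upd x b t $ a = (if a = b then t else x $ a)" by (simp add: upd_def)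
lemma upd_same[simp]: "upd x b t $ b = t" by (simp add: upd_def)
lemma upd_other[simp]: "a \<noteq> b \<Longrightarrow> upd x b t $ a = x $ a" by (simp add: upd_def)
lemma upd_upd[simp]: "upd (upd x b t) b s = upd x b s" by (simp add: upd_def vec_eq_iff)
lemma upd_self[simp]: "upd x b (x $ b) = x" by (simp add: upd_def vec_eq_iff)

lemma continuous_on_upd[continuous_intros]:
  assumes "continuous_on S f" "continuous_on S g"
  shows "continuous_on S (\<lambda>p. upd (f p) b (g p))"
  unfolding upd_def
proof (intro continuous_on_vec_lambda)
  fix a show "continuous_on S (\<lambda>p. if a = b then g p else f p $ a)"
    by (cases "a = b") (auto intro!: continuous_intros assms)
qed

lemma box_Pair_eq': "box (a, c) (b, d) = box a b \<times> box c d"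
  by (force simp: box_def Basis_prod_def)

lemma emeasure_box_cart:
  assumes "\<And>a. p $ a \<le> q $ a"
  shows "emeasure lborel (box p (q::real^'n::finite)) = ennreal (\<Prod>a\<in>UNIV. q $ a - p $ a)"
proof -
  have "\<forall>j\<in>Basis. p \<bullet> j \<le> q \<bullet> j" using assms by (auto simp: Basis_vec_def cart_eq_inner_axis[symmetric])
  then have "emeasure lborel (box p q) = (\<Prod>j\<in>Basis. (q - p) \<bullet> j)" by (simp add: emeasure_lborel_box_eq)
  also have "(\<Prod>j\<in>Basis. (q - p) \<bullet> j) = (\<Prod>a\<in>UNIV. q $ a - p $ a)"
    by (simp add: Basis_vec_def cart_eq_inner_axis axis_eq_axis prod.UNION_disjoint inner_diff_left)
  finally show ?thesis by simp
qed

definition Esw :: "'n::finite \<Rightarrow> (real^'n) \<times> real \<Rightarrow> (real^'n) \<times> real" where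
  "Esw b p = (upd (fst p) b (snd p), fst p $ b)"

lemma Esw_cont: "continuous_on UNIV (Esw b)"
  unfolding Esw_def by (intro continuous_intros)

lemma Esw_meas[measurable]: "Esw b \<in> borel_measurable borel"
  by (rule borel_measurable_continuous_onI[OF Esw_cont])

lemma prod_upd_swap:
  fixes l1 u1 :: "real^'n::finite"
  shows "(\<Prod>a\<in>UNIV. upd u1 b u2 $ a - upd l1 b l2 $ a) * (u1 $ b - l1 $ b) =
         (\<Prod>a\<in>UNIV. u1 $ a - l1 $ a) * (u2 - l2)"
proof -
  have "(\<Prod>a\<in>UNIV. upd u1 b u2 $ a - upd l1 b l2 $ a) = (u2 - l2) * (\<Prod>a\<in>UNIV-{b}. u1 $ a - l1 $ a)"
    by (simp add: prod.remove[of UNIV b])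
  moreover have "(\<Prod>a\<in>UNIV. u1 $ a - l1 $ a) = (u1 $ b - l1 $ b) * (\<Prod>a\<in>UNIV-{b}. u1 $ a - l1 $ a)"
    by (simp add: prod.remove[of UNIV b])
  ultimately show ?thesis by simp
qed

lemma distr_Esw: "distr lborel borel (Esw b) = (lborel :: ((real^'n::finite) \<times> real) measure)"
proof (rule lborel_eqI[symmetric])
  fix l u :: "(real^'n) \<times> real"
  assume lu: "\<And>j. j \<in> Basis \<Longrightarrow> l \<bullet> j \<le> u \<bullet> j"
  obtain l1 l2 u1 u2 where l: "l = (l1, l2)" and u: "u = (u1, u2)" by (cases l, cases u) auto
  have c1: "l1 $ a \<le> u1 $ a" for a
  proof -
    have "(axis a 1, 0) \<in> (Basis :: ((real^'n) \<times> real) set)" by (auto simp: Basis_prod_def Basis_vec_def)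
    from lu[OF this] show ?thesis by (simp add: l u cart_eq_inner_axis)
  qed
  have c2: "l2 \<le> u2" using lu[of "(0, 1)"] by (simp add: l u Basis_prod_def)
  have pre: "Esw b -` box l u = box (upd l1 b l2) (upd u1 b u2) \<times> box (l1 $ b) (u1 $ b)"
  proof (rule set_eqI)
    fix p :: "(real^'n) \<times> real"
    obtain x t where p: "p = (x, t)" by (cases p) auto
    show "p \<in> Esw b -` box l u \<longleftrightarrow> p \<in> box (upd l1 b l2) (upd u1 b u2) \<times> box (l1 $ b) (u1 $ b)"
      unfolding p l u Esw_def box_Pair_eq' by (auto simp: mem_box_cart upd_nth split: if_splits)
  qed
  have "emeasure (distr lborel borel (Esw b)) (box l u) = emeasure lborel (Esw b -` box l u)"
    by (subst emeasure_distr) auto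
  also have "\<dots> = emeasure (lborel \<Otimes>\<^sub>M lborel) (box (upd l1 b l2) (upd u1 b u2) \<times> box (l1 $ b) (u1 $ b))"
    by (simp add: pre lborel_prod)
  also have "\<dots> = emeasure lborel (box (upd l1 b l2) (upd u1 b u2)) * emeasure lborel (box (l1 $ b) (u1 $ b))"
    by (rule lborel.emeasure_pair_measure_Times) auto
  also have "\<dots> = ennreal ((\<Prod>a\<in>UNIV. upd u1 b u2 $ a - upd l1 b l2 $ a) * (u1 $ b - l1 $ b))"
    using c1 c2 by (simp add: emeasure_box_cart upd_nth ennreal_mult prod_nonneg)
  also have "\<dots> = ennreal ((\<Prod>a\<in>UNIV. u1 $ a - l1 $ a) * (u2 - l2))"
    by (simp add: prod_upd_swap)
  also have "\<dots> = emeasure lborel (box l1 u1) * emeasure lborel (box l2 u2)"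
    using c1 c2 by (simp add: emeasure_box_cart ennreal_mult prod_nonneg)
  also have "\<dots> = emeasure (lborel \<Otimes>\<^sub>M lborel) (box l1 u1 \<times> box l2 u2)"
    by (rule lborel.emeasure_pair_measure_Times[symmetric]) auto
  also have "\<dots> = emeasure lborel (box l u)"
    by (simp add: l u box_Pair_eq' lborel_prod)
  also have "\<dots> = (\<Prod>j\<in>Basis. (u - l) \<bullet> j)"
    using lu by (simp add: emeasure_lborel_box_eq)
  finally show "emeasure (distr lborel borel (Esw b)) (box l u) = (\<Prod>j\<in>Basis. (u - l) \<bullet> j)" .
qed simp

lemma upd_meas[measurable]: "(\<lambda>p. upd (fst p) b (snd p)) \<in> borel_measurable (borel :: ((real^'n::finite) \<times> real) measure)"
  by (rule borel_measurable_continuous_onI) (intro continuous_intros)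

lemma upd_meas2[measurable]: "(\<lambda>t. upd x b t) \<in> borel_measurable (borel :: real measure)"
  by (rule borel_measurable_continuous_onI) (intro continuous_intros)

lemma nn_integral_Icc01: "(\<integral>\<^sup>+t. indicator {0..1::real} t \<partial>lborel) = 1"
  by simp

lemma slice:
  fixes F :: "real^'n::finite \<Rightarrow> ennreal"
  assumes [measurable]: "F \<in> borel_measurable borel"
  shows "(\<integral>\<^sup>+x. F x \<partial>lborel) =
    (\<integral>\<^sup>+x. indicator {0..1} (x $ b) * (\<integral>\<^sup>+t. F (upd x b t) \<partial>lborel) \<partial>lborel)"
proof -
  define G :: "(real^'n) \<times> real \<Rightarrow> ennreal" where "G q = indicator {0..1} (snd q) * F (fst q)" for q
  have Gm[measurable]: "G \<in> borel_measurable borel" unfolding G_def borel_prod[symmetric] by measurable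
  have "(\<integral>\<^sup>+x. indicator {0..1} (x $ b) * (\<integral>\<^sup>+t. F (upd x b t) \<partial>lborel) \<partial>lborel) =
        (\<integral>\<^sup>+x. (\<integral>\<^sup>+t. G (Esw b (x, t)) \<partial>lborel) \<partial>lborel)"
    by (intro nn_integral_cong) (simp add: G_def Esw_def nn_integral_cmult)
  also have "\<dots> = (\<integral>\<^sup>+p. G (Esw b p) \<partial>(lborel \<Otimes>\<^sub>M lborel))"
    by (rule lborel.nn_integral_fst) (simp add: lborel_prod)
  also have "\<dots> = (\<integral>\<^sup>+p. G (Esw b p) \<partial>lborel)" by (simp add: lborel_prod)
  also have "\<dots> = (\<integral>\<^sup>+q. G q \<partial>(distr lborel borel (Esw b)))"
    by (subst nn_integral_distr) auto
  also have "\<dots> = (\<integral>\<^sup>+q. G q \<partial>lborel)" by (simp add: distr_Esw)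
  also have "\<dots> = (\<integral>\<^sup>+q. G q \<partial>(lborel \<Otimes>\<^sub>M lborel))" by (simp add: lborel_prod)
  also have "\<dots> = (\<integral>\<^sup>+x. (\<integral>\<^sup>+t. G (x, t) \<partial>lborel) \<partial>lborel)"
    by (rule lborel.nn_integral_fst[symmetric]) (simp add: lborel_prod)
  also have "\<dots> = (\<integral>\<^sup>+x. F x \<partial>lborel)"
    by (simp add: G_def nn_integral_multc)
  finally show ?thesis by simp
qed

lemma card_split: "card {a::'n::finite. P a} = card {a. a \<noteq> b \<and> P a} + (if P b then 1 else 0)"
proof (cases "P b")
  case True
  then have "{a. P a} = insert b {a. a \<noteq> b \<and> P a}" by auto
  then show ?thesis using True by simp
next
  case False
  then have "{a. P a} = {a. a \<noteq> b \<and> P a}" by auto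
  then show ?thesis using False by simp
qed

lemma count_rel:
  "card {a::'n::finite. P ((x::real^'n) $ a)} + (if P 0 then 1 else 0) =
   card {a. P (upd x b 0 $ a)} + (if P (x $ b) then 1 else 0)"
proof -
  have "{a. a \<noteq> b \<and> P (x $ a)} = {a. a \<noteq> b \<and> P (upd x b 0 $ a)}" by auto
  then show ?thesis
    using card_split[of "\<lambda>a. P (x $ a)" b] card_split[of "\<lambda>a. P (upd x b 0 $ a)" b] by simp
qed

lemma upd_cube: "upd x b t \<in> cube \<longleftrightarrow> upd x b 0 \<in> cube \<and> 0 \<le> t \<and> t \<le> 1"
  by (auto simp: in_cube upd_nth)

lemma os_1_upd0:
  assumes "upd x b 0 \<in> cube"
  shows "os (upd x b 0) 1 = (0::real)"
proof -
  have "b \<in> {a. upd x b 0 $ a \<le> 0}" by simp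
  then have "{a. upd x b 0 $ a \<le> 0} \<noteq> {}" by blast
  then have "1 \<le> card {a. upd x b 0 $ a \<le> 0}" by (simp add: Suc_le_eq card_gt_0_iff)
  then have "os (upd x b 0) 1 \<le> 0" by (subst os_le_iff) auto
  then show ?thesis using os_bounds(1)[OF assms, of 1] by simp
qed

definition Lo :: "'n::finite \<Rightarrow> nat \<Rightarrow> real^'n \<Rightarrow> real" where "Lo b k x = os (upd x b 0) k"
definition Up :: "'n::finite \<Rightarrow> nat \<Rightarrow> real^'n \<Rightarrow> real" where "Up b k x = os (upd x b 0) (Suc k)"
definition Rg :: "'n::finite \<Rightarrow> nat \<Rightarrow> (real^'n) set" where
  "Rg b k = {x. upd x b 0 \<in> cube \<and> Lo b k x < x $ b \<and> x $ b < Up b k x}"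
definition rho :: "'n::finite \<Rightarrow> nat \<Rightarrow> real^'n \<Rightarrow> real^'n" where
  "rho b k x = upd x b (Lo b k x + Up b k x - x $ b)"

lemma Lo_upd[simp]: "Lo b k (upd x b t) = Lo b k x" and Up_upd[simp]: "Up b k (upd x b t) = Up b k x"
  by (simp_all add: Lo_def Up_def)

lemma Rg_cube: assumes "x \<in> Rg b k" shows "x \<in> cube"
proof -
  have y: "upd x b 0 \<in> cube" and lu: "Lo b k x < x $ b" "x $ b < Up b k x" using assms by (auto simp: Rg_def)
  have "0 \<le> Lo b k x" "Up b k x \<le> 1" using os_bounds[OF y] by (auto simp: Lo_def Up_def)
  then have "upd x b (x $ b) \<in> cube" using y lu by (subst upd_cube) auto
  then show ?thesis by simp
qed

lemma os_insert:
  assumes R: "x \<in> Rg b k" and k: "1 \<le> k" "k \<le> CARD('n::finite)" and i: "i \<le> CARD('n) + 1"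
  shows "os (x::real^'n) i = (if i < k then os (upd x b 0) (Suc i) else if i = k then x $ b else os (upd x b 0) i)"
proof -
  let ?n = "CARD('n)"
  define y where "y = upd x b 0"
  have y: "y \<in> cube" and L: "os y k < x $ b" and U: "x $ b < os y (Suc k)"
    using R by (auto simp: Rg_def Lo_def Up_def y_def)
  have x: "x \<in> cube" using Rg_cube[OF R] .
  have xb0: "0 \<le> x $ b" using x in_cube by blast
  define RHS where "RHS = (if i < k then os y (Suc i) else if i = k then x $ b else os y i)"
  consider "i = 0" | "i = ?n + 1" | "1 \<le> i" "i \<le> ?n" using i by linarith
  then have "os x i = RHS"
  proof cases
    case 1 then show ?thesis using k os_1_upd0[of x b] y by (simp add: RHS_def y_def)
  next
    case 2 then show ?thesis using k by (simp add: RHS_def)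
  next
    case 3
    show ?thesis
    proof (rule os_unique)
      fix t :: real
      show "os x i \<le> t \<longleftrightarrow> RHS \<le> t"
      proof (cases "t < 0")
        case True
        have "0 \<le> RHS" using os_bounds(1)[OF y] xb0 by (simp add: RHS_def)
        then show ?thesis using True os_bounds(1)[OF x, of i] by simp
      next
        case False
        let ?cx = "card {a. x $ a \<le> t}" and ?cy = "card {a. y $ a \<le> t}"
        have r: "?cx + 1 = ?cy + (if x $ b \<le> t then 1 else 0)"
          using count_rel[of "\<lambda>v. v \<le> t" x b] False by (simp add: y_def)
        have h1: "k \<le> ?cy" if "x $ b \<le> t"
        proof -
          have "os y k \<le> t" using L that by simp
          then show ?thesis using k by (subst (asm) os_le_iff) auto
        qed
        have h2: "?cy \<le> k" if "t < x $ b"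
        proof (cases "k < ?n")
          case True
          have "\<not> os y (Suc k) \<le> t" using U that by simp
          then show ?thesis using k True by (subst (asm) os_le_iff) auto
        next
          case False
          have "?cy \<le> card (UNIV::'n set)" by (rule card_mono) auto
          then show ?thesis using False k by simp
        qed
        have ox: "os x i \<le> t \<longleftrightarrow> i \<le> ?cx" using 3 by (rule os_le_iff)
        consider "i < k" | "i = k" | "k < i" by linarith
        then show ?thesis
        proof cases
          case 1
          have "os y (Suc i) \<le> t \<longleftrightarrow> Suc i \<le> ?cy" using 1 k by (intro os_le_iff) auto
          then show ?thesis using 1 ox r h1 h2 by (cases "x $ b \<le> t") (auto simp: RHS_def)
        next
          case 2
          then show ?thesis using ox r h1 h2 by (cases "x $ b \<le> t") (auto simp: RHS_def)
        next
          case 4: 3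
          have "os y i \<le> t \<longleftrightarrow> i \<le> ?cy" using 3 by (intro os_le_iff) auto
          then show ?thesis using 4 ox r h1 h2 by (cases "x $ b \<le> t") (auto simp: RHS_def)
        qed
      qed
    qed
  qed
  then show ?thesis by (simp add: RHS_def y_def)
qed

lemma rho_upd0[simp]: "upd (rho b k x) b 0 = upd x b 0"
  by (simp add: rho_def)

lemma Lo_rho[simp]: "Lo b k (rho b k x) = Lo b k x" and Up_rho[simp]: "Up b k (rho b k x) = Up b k x"
  by (simp_all add: rho_def)

lemma rho_b: "rho b k x $ b = Lo b k x + Up b k x - x $ b"
  by (simp add: rho_def)

lemma rho_Rg: "x \<in> Rg b k \<Longrightarrow> rho b k x \<in> Rg b k"
  by (auto simp: Rg_def rho_b)

lemma os_rho:
  assumes R: "x \<in> Rg b k" and k: "1 \<le> k" "k \<le> CARD('n::finite)" and i: "i \<le> CARD('n) + 1"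
  shows "os (rho b k (x::real^'n)) i =
    (if i = k then os x (k - 1) + os x (Suc k) - os x k else os x i)"
proof -
  have R': "rho b k x \<in> Rg b k" using R by (rule rho_Rg)
  have a: "os x (k - 1) = Lo b k x" using os_insert[OF R k, of "k - 1"] k by (simp add: Lo_def)
  have c: "os x (Suc k) = Up b k x" using os_insert[OF R k, of "Suc k"] k by (simp add: Up_def)
  have d: "os x k = x $ b" using os_insert[OF R k, of k] k by simp
  show ?thesis
    using os_insert[OF R' k i] os_insert[OF R k i] a c d by (simp add: rho_b)
qed

lemma Rg_partition:
  assumes x: "x \<in> cube" and inj: "\<And>a a'. a \<noteq> a' \<Longrightarrow> (x::real^'n::finite) $ a \<noteq> x $ a'"
    and int: "\<And>a. 0 < x $ a \<and> x $ a < 1" and k: "1 \<le> k" "k \<le> CARD('n)"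
  obtains b where "x \<in> Rg b k" "\<And>b'. x \<in> Rg b' k \<Longrightarrow> b' = b"
proof -
  let ?n = "CARD('n)"
  obtain \<sigma> where \<sigma>: "bij_betw \<sigma> {1..?n} (UNIV::'n set)" "\<And>i. i \<in> {1..?n} \<Longrightarrow> x $ \<sigma> i = os x i"
    using os_sorting by blast
  define b where "b = \<sigma> k"
  have xb: "x $ b = os x k" using \<sigma>(2)[of k] k by (simp add: b_def)
  define y where "y = upd x b 0"
  have y: "y \<in> cube" using x by (auto simp: y_def in_cube upd_nth)
  let ?lt = "card {a. x $ a < x $ b}" and ?le = "card {a. x $ a \<le> x $ b}"
  have le_lt: "?le = ?lt + 1"
  proof -
    have "{a. a \<noteq> b \<and> x $ a \<le> x $ b} = {a. a \<noteq> b \<and> x $ a < x $ b}"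
      using inj by (auto simp: order_le_less)
    then show ?thesis
      using card_split[of "\<lambda>a. x $ a \<le> x $ b" b] card_split[of "\<lambda>a. x $ a < x $ b" b] by simp
  qed
  have "\<not> os x k < x $ b" using xb by simp
  then have lt1: "\<not> k \<le> ?lt" using k by (subst (asm) os_lt_iff) auto
  have "os x k \<le> x $ b" using xb by simp
  then have lt2: "k \<le> ?le" using k by (subst (asm) os_le_iff) auto
  have lt: "?lt = k - 1" using lt1 lt2 le_lt by linarith
  have ylt: "card {a. y $ a < x $ b} = ?lt + 1"
    using count_rel[of "\<lambda>v. v < x $ b" x b] int[of b] by (simp add: y_def)
  have yle: "card {a. y $ a \<le> x $ b} = ?le"
    using count_rel[of "\<lambda>v. v \<le> x $ b" x b] int[of b] by (simp add: y_def)
  have L: "os y k < x $ b" using k ylt lt by (subst os_lt_iff) auto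
  have U: "x $ b < os y (Suc k)"
  proof (cases "k < ?n")
    case True
    have "\<not> Suc k \<le> card {a. y $ a \<le> x $ b}" using yle le_lt lt k by simp
    then have "\<not> os y (Suc k) \<le> x $ b" using True by (subst os_le_iff) auto
    then show ?thesis by simp
  next
    case False
    then show ?thesis using k int[of b] by simp
  qed
  have Rb: "x \<in> Rg b k" using y L U by (simp add: Rg_def Lo_def Up_def y_def)
  have "b' = b" if "x \<in> Rg b' k" for b'
  proof -
    have "os x k = x $ b'" using os_insert[OF that k, of k] k by simp
    then show "b' = b" using xb inj by metis
  qed
  then show ?thesis using Rb that by blast
qed

lemma null_coord: "{x::real^'n::finite. x $ a = c} \<in> null_sets lborel"
proof -
  have "negligible {x::real^'n. axis a 1 \<bullet> x = c}"
    by (rule negligible_hyperplane) (simp add: axis_eq_0_iff)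
  moreover have "{x::real^'n. axis a 1 \<bullet> x = c} = {x. x $ a = c}"
    by (simp add: inner_commute cart_eq_inner_axis)
  ultimately have "{x::real^'n. x $ a = c} \<in> null_sets lebesgue" by (simp add: negligible_iff_null_sets)
  moreover have "{x::real^'n. x $ a = c} \<in> sets borel"
    by (rule closed_Collect_eq[THEN borel_closed]) (intro continuous_intros)+
  ultimately show ?thesis by (simp add: null_sets_completion_iff)
qed

lemma null_diag:
  assumes "a \<noteq> a'"
  shows "{x::real^'n::finite. x $ a = x $ a'} \<in> null_sets lborel"
proof -
  have "negligible {x::real^'n. (axis a 1 - axis a' 1) \<bullet> x = 0}"
    by (rule negligible_hyperplane) (use assms in \<open>simp add: axis_eq_axis\<close>)
  moreover have "{x::real^'n. (axis a 1 - axis a' 1) \<bullet> x = 0} = {x. x $ a = x $ a'}"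
    by (simp add: inner_commute cart_eq_inner_axis inner_diff_right)
  ultimately have "{x::real^'n. x $ a = x $ a'} \<in> null_sets lebesgue" by (simp add: negligible_iff_null_sets)
  moreover have "{x::real^'n. x $ a = x $ a'} \<in> sets borel"
    by (rule closed_Collect_eq[THEN borel_closed]) (intro continuous_intros)+
  ultimately show ?thesis by (simp add: null_sets_completion_iff)
qed

lemma AE_generic:
  "AE x in lborel. (\<forall>a a'. a \<noteq> a' \<longrightarrow> (x::real^'n::finite) $ a \<noteq> x $ a') \<and> (\<forall>a. x $ a \<noteq> 0 \<and> x $ a \<noteq> 1)"
proof -
  have "AE x in lborel. \<forall>a\<in>UNIV. \<forall>a'\<in>UNIV. a \<noteq> a' \<longrightarrow> (x::real^'n) $ a \<noteq> x $ a'"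
  proof (subst AE_finite_all, simp, intro ballI, subst AE_finite_all, simp, intro ballI)
    fix a a' :: 'n
    show "AE x in lborel. a \<noteq> a' \<longrightarrow> (x::real^'n) $ a \<noteq> x $ a'"
    proof (cases "a = a'")
      case False
      have "AE x in lborel. (x::real^'n) $ a \<noteq> x $ a'" by (rule AE_I'[OF null_diag[OF False]]) auto
      then show ?thesis by simp
    qed simp
  qed
  moreover have "AE x in lborel. \<forall>a\<in>UNIV. (x::real^'n) $ a \<noteq> 0 \<and> x $ a \<noteq> 1"
  proof (subst AE_finite_all, simp, intro ballI)
    fix a :: 'n
    have "AE x in lborel. (x::real^'n) $ a \<noteq> 0" by (intro AE_I'[OF null_coord]) auto
    moreover have "AE x in lborel. (x::real^'n) $ a \<noteq> 1" by (intro AE_I'[OF null_coord]) auto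
    ultimately show "AE x in lborel. (x::real^'n) $ a \<noteq> 0 \<and> x $ a \<noteq> 1" by eventually_elim auto
  qed
  ultimately show ?thesis by eventually_elim auto
qed

lemma AE_cube_Rg:
  assumes k: "1 \<le> k" "k \<le> CARD('n::finite)"
  shows "AE x in lborel. indicator cube x = (\<Sum>b\<in>UNIV. indicator (Rg b k) (x::real^'n) :: ennreal)"
  using AE_generic
proof eventually_elim
  case (elim x)
  show ?case
  proof (cases "x \<in> cube")
    case True
    have int: "0 < x $ a \<and> x $ a < 1" for a
    proof -
      have "0 \<le> x$a" "x$a \<le> 1" using True in_cube by blast+
      moreover have "x$a \<noteq> 0" "x$a \<noteq> 1" using conjunct2[OF elim] by simp_all
      ultimately show ?thesis by (auto simp: order_less_le)
    qed
    have inj: "\<And>a a'. a \<noteq> a' \<Longrightarrow> x $ a \<noteq> x $ a'" using conjunct1[OF elim] by simp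
    obtain b where b: "x \<in> Rg b k" "\<And>b'. x \<in> Rg b' k \<Longrightarrow> b' = b"
      using Rg_partition[OF True inj int k] by metis
    have "(\<Sum>b'\<in>UNIV. indicator (Rg b' k) x :: ennreal) = indicator (Rg b k) x + (\<Sum>b'\<in>UNIV-{b}. indicator (Rg b' k) x)"
      by (rule sum.remove) auto
    moreover have "(\<Sum>b'\<in>UNIV-{b}. indicator (Rg b' k) x :: ennreal) = 0"
    proof (intro sum.neutral ballI)
      fix b' assume "b' \<in> UNIV - {b}"
      then have "x \<notin> Rg b' k" using b(2) by blast
      then show "indicator (Rg b' k) x = (0::ennreal)" by simp
    qed
    ultimately have "(\<Sum>b'\<in>UNIV. indicator (Rg b' k) x :: ennreal) = indicator (Rg b k) x" by simp
    then show ?thesis using True b(1) by simp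
  next
    case False
    then have "x \<notin> Rg b k" for b using Rg_cube by blast
    then show ?thesis using False by simp
  qed
qed

lemma os_comp_cont[continuous_intros]:
  "continuous_on S f \<Longrightarrow> continuous_on S (\<lambda>x. os (f x :: real^'n::finite) i)"
  by (rule continuous_on_compose2[OF os_continuous]) auto

lemma Lo_cont: "continuous_on S (Lo b k)" and Up_cont: "continuous_on S (Up b k)"
  unfolding Lo_def[abs_def] Up_def[abs_def] by (intro continuous_intros)+

lemma rho_meas[measurable]: "rho b k \<in> borel_measurable borel"
  unfolding rho_def[abs_def]
  by (rule borel_measurable_continuous_onI) (intro continuous_intros Lo_cont Up_cont)

lemma Rg_sets[measurable]: "Rg (b::'n::finite) k \<in> sets borel"
proof -
  have "Rg b k = {x::real^'n. upd x b 0 \<in> cube} \<inter> {x. Lo b k x < x $ b} \<inter> {x. x $ b < Up b k x}"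
    by (auto simp: Rg_def)
  moreover have "closed {x::real^'n. upd x b 0 \<in> cube}"
  proof -
    have "{x::real^'n. upd x b 0 \<in> cube} = (\<lambda>x. upd x b 0) -` cube" by auto
    moreover have "closed ((\<lambda>x::real^'n. upd x b 0) -` cube)"
      by (rule closed_vimage) (auto intro!: continuous_intros)
    ultimately show ?thesis by simp
  qed
  moreover have "open {x::real^'n. Lo b k x < x $ b}" "open {x::real^'n. x $ b < Up b k x}"
    by (intro open_Collect_less continuous_intros Lo_cont Up_cont)+
  ultimately show ?thesis by (auto intro: borel_closed borel_open)
qed

lemma indicator_Rg_upd:
  "indicator (Rg b k) (upd x b t) = (indicator {x. upd x b 0 \<in> cube} x * indicator {Lo b k x<..<Up b k x} t :: ennreal)"
  by (simp add: Rg_def indicator_def)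

lemma rho_upd: "rho b k (upd x b t) = upd x b (Lo b k x + Up b k x - t)"
  by (simp add: rho_def)

lemma refl_Rg:
  fixes \<Phi> :: "real^'n::finite \<Rightarrow> ennreal"
  assumes [measurable]: "\<Phi> \<in> borel_measurable borel"
  shows "(\<integral>\<^sup>+x. \<Phi> (rho b k x) * indicator (Rg b k) x \<partial>lborel) = (\<integral>\<^sup>+x. \<Phi> x * indicator (Rg b k) x \<partial>lborel)"
proof -
  have inner: "(\<integral>\<^sup>+t. \<Phi> (rho b k (upd x b t)) * indicator (Rg b k) (upd x b t) \<partial>lborel) =
               (\<integral>\<^sup>+t. \<Phi> (upd x b t) * indicator (Rg b k) (upd x b t) \<partial>lborel)" for x
  proof -
    let ?L = "Lo b k x" and ?U = "Up b k x" and ?C = "indicator {x. upd x b 0 \<in> cube} x :: ennreal"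
    define g where "g t = \<Phi> (upd x b t) * (?C * indicator {?L<..<?U} t)" for t
    have gm: "g \<in> borel_measurable borel" unfolding g_def by measurable
    have "(\<integral>\<^sup>+t. \<Phi> (upd x b t) * indicator (Rg b k) (upd x b t) \<partial>lborel) = (\<integral>\<^sup>+t. g t \<partial>lborel)"
      by (simp add: g_def indicator_Rg_upd)
    also have "\<dots> = (\<integral>\<^sup>+t. g ((?L + ?U) + (-1) * t) \<partial>lborel)"
      using nn_integral_real_affine[OF gm, of "-1" "?L + ?U"] by simp
    also have "\<dots> = (\<integral>\<^sup>+t. \<Phi> (rho b k (upd x b t)) * indicator (Rg b k) (upd x b t) \<partial>lborel)"
    proof (intro nn_integral_cong)
      fix t
      have "indicator {?L<..<?U} (?L + ?U + -1 * t) = (indicator {?L<..<?U} t :: ennreal)"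
        by (auto simp: indicator_def)
      then show "g (?L + ?U + -1 * t) = \<Phi> (rho b k (upd x b t)) * indicator (Rg b k) (upd x b t)"
        by (simp add: g_def indicator_Rg_upd rho_upd)
    qed
    finally show ?thesis by simp
  qed
  show ?thesis
    by (subst (1 2) slice[where b=b]) (simp_all add: inner)
qed

lemma exch_nn:
  fixes \<Phi>1 \<Phi>2 :: "real^'n::finite \<Rightarrow> ennreal"
  assumes k: "1 \<le> k" "k \<le> CARD('n)"
    and [measurable]: "\<Phi>1 \<in> borel_measurable borel" "\<Phi>2 \<in> borel_measurable borel"
    and H: "\<And>b x. x \<in> Rg b k \<Longrightarrow> \<Phi>1 (rho b k x) = \<Phi>2 x"
  shows "(\<integral>\<^sup>+x. \<Phi>1 x * indicator cube x \<partial>lborel) = (\<integral>\<^sup>+x. \<Phi>2 x * indicator cube x \<partial>lborel)"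
proof -
  have split: "(\<integral>\<^sup>+x. \<Phi> x * indicator cube x \<partial>lborel) = (\<Sum>b\<in>UNIV. \<integral>\<^sup>+x. \<Phi> x * indicator (Rg b k) x \<partial>lborel)"
    if [measurable]: "\<Phi> \<in> borel_measurable borel" for \<Phi> :: "real^'n \<Rightarrow> ennreal"
  proof -
    have "(\<integral>\<^sup>+x. \<Phi> x * indicator cube x \<partial>lborel) = (\<integral>\<^sup>+x. (\<Sum>b\<in>UNIV. \<Phi> x * indicator (Rg b k) x) \<partial>lborel)"
      using AE_cube_Rg[OF k] by (intro nn_integral_cong_AE) (auto elim!: eventually_mono simp: sum_distrib_left)
    also have "\<dots> = (\<Sum>b\<in>UNIV. \<integral>\<^sup>+x. \<Phi> x * indicator (Rg b k) x \<partial>lborel)"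
      by (rule nn_integral_sum) measurable
    finally show ?thesis .
  qed
  have eq: "(\<integral>\<^sup>+x. \<Phi>1 x * indicator (Rg b k) x \<partial>lborel) = (\<integral>\<^sup>+x. \<Phi>2 x * indicator (Rg b k) x \<partial>lborel)" for b
  proof -
    have "(\<integral>\<^sup>+x. \<Phi>1 x * indicator (Rg b k) x \<partial>lborel) = (\<integral>\<^sup>+x. \<Phi>1 (rho b k x) * indicator (Rg b k) x \<partial>lborel)"
      by (rule refl_Rg[symmetric]) measurable
    also have "\<dots> = (\<integral>\<^sup>+x. \<Phi>2 x * indicator (Rg b k) x \<partial>lborel)"
      by (intro nn_integral_cong) (simp add: H indicator_def)
    finally show ?thesis .
  qed
  show ?thesis using split[of \<Phi>1] split[of \<Phi>2] eq by simp
qed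


lemma integrable_cube: "continuous_on UNIV \<phi> \<Longrightarrow> (\<phi> :: real^'n::finite \<Rightarrow> real) integrable_on cube"
  by (metis continuous_on_subset integrable_continuous top_greatest)

lemma exch_int:
  fixes \<phi>1 \<phi>2 :: "real^'n::finite \<Rightarrow> real"
  assumes k: "1 \<le> k" "k \<le> CARD('n)"
    and c1: "continuous_on UNIV \<phi>1" and c2: "continuous_on UNIV \<phi>2"
    and n1: "\<And>x. x \<in> cube \<Longrightarrow> 0 \<le> \<phi>1 x" and n2: "\<And>x. x \<in> cube \<Longrightarrow> 0 \<le> \<phi>2 x"
    and H: "\<And>b x. x \<in> Rg b k \<Longrightarrow> \<phi>1 (rho b k x) = \<phi>2 x"
  shows "integral cube \<phi>1 = integral cube \<phi>2"
proof -
  have m1[measurable]: "\<phi>1 \<in> borel_measurable borel" by (rule borel_measurable_continuous_onI[OF c1])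
  have m2[measurable]: "\<phi>2 \<in> borel_measurable borel" by (rule borel_measurable_continuous_onI[OF c2])
  have i1: "(\<integral>\<^sup>+x. ennreal (\<phi>1 x) * indicator cube x \<partial>lborel) = ennreal (integral cube \<phi>1)"
    using n1 integrable_integral[OF integrable_cube[OF c1]] by (rule nn_integral_has_integral_lebesgue')
  have i2: "(\<integral>\<^sup>+x. ennreal (\<phi>2 x) * indicator cube x \<partial>lborel) = ennreal (integral cube \<phi>2)"
    using n2 integrable_integral[OF integrable_cube[OF c2]] by (rule nn_integral_has_integral_lebesgue')
  have "(\<integral>\<^sup>+x. ennreal (\<phi>1 x) * indicator cube x \<partial>lborel) = (\<integral>\<^sup>+x. ennreal (\<phi>2 x) * indicator cube x \<partial>lborel)"
    by (rule exch_nn[OF k]) (auto simp: H)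
  then have "ennreal (integral cube \<phi>1) = ennreal (integral cube \<phi>2)" using i1 i2 by simp
  moreover have "0 \<le> integral cube \<phi>1" "0 \<le> integral cube \<phi>2"
    using n1 n2 integrable_cube[OF c1] integrable_cube[OF c2] by (auto intro!: integral_nonneg)
  ultimately show ?thesis by simp
qed

definition sp :: "real^'n::finite \<Rightarrow> nat \<Rightarrow> real" where
  "sp x l = os x l - os x (l - 1)"

definition tr :: "nat \<Rightarrow> nat \<Rightarrow> nat" where
  "tr k l = (if l = k then Suc k else if l = Suc k then k else l)"

lemma sp_cont[continuous_intros]: "continuous_on S (\<lambda>x. sp x l)"
  unfolding sp_def by (intro continuous_intros)

lemma sp_nonneg: "x \<in> cube \<Longrightarrow> l \<le> CARD('n::finite) + 1 \<Longrightarrow> 0 \<le> sp (x::real^'n) l"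
  unfolding sp_def using os_mono[of x "l - 1" l] by simp

lemma sp_rho:
  assumes R: "x \<in> Rg b k" and k: "1 \<le> k" "k \<le> CARD('n::finite)" and l: "1 \<le> l" "l \<le> CARD('n) + 1"
  shows "sp (rho b k (x::real^'n)) l = sp x (tr k l)"
proof -
  have A: "os (rho b k x) i = (if i = k then os x (k - 1) + os x (Suc k) - os x k else os x i)"
    if "i \<le> CARD('n) + 1" for i using os_rho[OF R k that] .
  consider "l = k" | "l = Suc k" | "l \<noteq> k" "l \<noteq> Suc k" by blast
  then show ?thesis
  proof cases
    case 1
    have "k - 1 \<noteq> k" using k by simp
    then show ?thesis using 1 A[of k] A[of "k - 1"] k by (simp add: sp_def tr_def)
  next
    case 2 then show ?thesis using A[of k] A[of "Suc k"] k by (simp add: sp_def tr_def)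
  next
    case 3
    have "l - 1 \<noteq> k" using 3 l by linarith
    then show ?thesis using 3 A[of l] A[of "l - 1"] l k by (simp add: sp_def tr_def)
  qed
qed

lemma tr_range: "1 \<le> k \<Longrightarrow> k \<le> CARD('n::finite) \<Longrightarrow> 1 \<le> l \<Longrightarrow> l \<le> CARD('n) + 1 \<Longrightarrow>
   1 \<le> tr k l \<and> tr k l \<le> CARD('n) + 1"
  by (auto simp: tr_def)

definition P1 :: "'n::finite itself \<Rightarrow> nat \<Rightarrow> real" where
  "P1 T l = integral (cube :: (real^'n) set) (\<lambda>x. sp x l)"
definition Q2 :: "'n::finite itself \<Rightarrow> nat \<Rightarrow> nat \<Rightarrow> real" where
  "Q2 T l m = integral (cube :: (real^'n) set) (\<lambda>x. sp x l * sp x m)"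

lemma P1_swap:
  assumes k: "1 \<le> k" "k \<le> CARD('n::finite)" and l: "1 \<le> l" "l \<le> CARD('n) + 1"
  shows "P1 TYPE('n) (tr k l) = P1 TYPE('n) l"
  unfolding P1_def
proof (rule exch_int[OF k])
  show "\<And>x. x \<in> cube \<Longrightarrow> 0 \<le> sp (x::real^'n) (tr k l)" using tr_range[OF k l] by (intro sp_nonneg) auto
  show "\<And>x. x \<in> cube \<Longrightarrow> 0 \<le> sp (x::real^'n) l" using l by (intro sp_nonneg) auto
  show "\<And>b x. x \<in> Rg b k \<Longrightarrow> sp (rho b k (x::real^'n)) (tr k l) = sp x l"
    using tr_range[OF k l] k by (subst sp_rho) (auto simp: tr_def)
qed (auto intro: continuous_intros)

lemma Q2_swap:
  assumes k: "1 \<le> k" "k \<le> CARD('n::finite)" and l: "1 \<le> l" "l \<le> CARD('n) + 1"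
    and m: "1 \<le> m" "m \<le> CARD('n) + 1"
  shows "Q2 TYPE('n) (tr k l) (tr k m) = Q2 TYPE('n) l m"
  unfolding Q2_def
proof (rule exch_int[OF k])
  show "\<And>x. x \<in> cube \<Longrightarrow> 0 \<le> sp (x::real^'n) (tr k l) * sp x (tr k m)"
    using tr_range[OF k l] tr_range[OF k m] by (intro mult_nonneg_nonneg sp_nonneg) auto
  show "\<And>x. x \<in> cube \<Longrightarrow> 0 \<le> sp (x::real^'n) l * sp x m" using l m by (intro mult_nonneg_nonneg sp_nonneg) auto
  show "\<And>b x. x \<in> Rg b k \<Longrightarrow> sp (rho b k (x::real^'n)) (tr k l) * sp (rho b k x) (tr k m) = sp x l * sp x m"
    using tr_range[OF k l] tr_range[OF k m] k by (subst (1 2) sp_rho) (auto simp: tr_def)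
qed (auto intro: continuous_intros)

lemma has_integral_sq01: "((\<lambda>t::real. t^2) has_integral 1/3) {0..1}"
proof -
  have "((\<lambda>t::real. t^2) has_integral ((\<lambda>t. t^3/3) 1 - (\<lambda>t. t^3/3) 0)) {0..1}"
    by (rule fundamental_theorem_of_calculus)
       (auto intro!: derivative_eq_intros simp: has_real_derivative_iff_has_vector_derivative[symmetric])
  then show ?thesis by simp
qed

lemma indicator_cube_upd:
  "indicator cube (upd x b t) = (indicator {x. upd x b 0 \<in> cube} x * indicator {0..1} t :: ennreal)"
  using upd_cube[of x b t] by (simp add: indicator_def)

lemma integral_coord_sq: "integral (cube::(real^'n::finite) set) (\<lambda>x. (x $ a)^2) = 1/3"
proof -
  have m: "(\<lambda>x::real^'n. ennreal ((x $ a)^2) * indicator cube x) \<in> borel_measurable borel" by measurable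
  have "(\<integral>\<^sup>+x. ennreal ((x $ a)^2) * indicator cube x \<partial>lborel) =
      (\<integral>\<^sup>+x. indicator {0..1} (x $ a) * (\<integral>\<^sup>+t. ennreal ((upd x a t $ a)^2) * indicator cube (upd x a t) \<partial>lborel) \<partial>lborel)"
    by (rule slice[OF m])
  also have "\<dots> = (\<integral>\<^sup>+x. indicator {0..1} (x $ a) * indicator {x. upd x a 0 \<in> cube} x * (\<integral>\<^sup>+t. ennreal (t^2) * indicator {0..1} t \<partial>lborel) \<partial>lborel)"
  proof (intro nn_integral_cong)
    fix x :: "real^'n"
    have "(\<integral>\<^sup>+t. ennreal ((upd x a t $ a)^2) * indicator cube (upd x a t) \<partial>lborel) =
        (\<integral>\<^sup>+t. indicator {x. upd x a 0 \<in> cube} x * (ennreal (t^2) * indicator {0..1} t) \<partial>lborel)"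
    proof (intro nn_integral_cong)
      fix t :: real
      show "ennreal ((upd x a t $ a)^2) * indicator cube (upd x a t) =
          indicator {x. upd x a 0 \<in> cube} x * (ennreal (t^2) * indicator {0..1} t)"
        unfolding indicator_cube_upd upd_same by (simp only: ac_simps)
    qed
    also have "\<dots> = indicator {x. upd x a 0 \<in> cube} x * (\<integral>\<^sup>+t. ennreal (t^2) * indicator {0..1} t \<partial>lborel)"
      by (rule nn_integral_cmult) measurable
    finally show "indicator {0..1} (x $ a) * (\<integral>\<^sup>+t. ennreal ((upd x a t $ a)^2) * indicator cube (upd x a t) \<partial>lborel) =
        indicator {0..1} (x $ a) * indicator {x. upd x a 0 \<in> cube} x * (\<integral>\<^sup>+t. ennreal (t^2) * indicator {0..1} t \<partial>lborel)"
      by (simp only: ac_simps)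
  qed
  also have "(\<integral>\<^sup>+t. ennreal (t^2) * indicator {0..1} t \<partial>lborel) = ennreal (1/3)"
    by (rule nn_integral_has_integral_lebesgue'[OF _ has_integral_sq01]) simp
  also have "(\<integral>\<^sup>+x. indicator {0..1} (x $ a) * indicator {x. upd x a 0 \<in> cube} x * ennreal (1/3) \<partial>lborel) =
      (\<integral>\<^sup>+x. indicator (cube::(real^'n) set) x * ennreal (1/3) \<partial>lborel)"
  proof (intro nn_integral_cong)
    fix x :: "real^'n"
    have "indicator {0..1} (x $ a) * indicator {x. upd x a 0 \<in> cube} x = (indicator cube x :: ennreal)"
      using indicator_cube_upd[of x a "x $ a"] by (simp add: mult.commute)
    then show "indicator {0..1} (x $ a) * indicator {x. upd x a 0 \<in> cube} x * ennreal (1/3) = indicator cube x * ennreal (1/3)"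
      by simp
  qed
  also have "\<dots> = emeasure lborel (cube::(real^'n) set) * ennreal (1/3)"
    by (subst nn_integral_multc) auto
  also have "emeasure lborel (cube::(real^'n) set) = 1"
  proof -
    have "(0::real^'n) \<in> cube" by (simp add: in_cube)
    then have ne: "(cube::(real^'n) set) \<noteq> {}" by blast
    have "emeasure lborel (cube::(real^'n) set) = ennreal (measure lborel (cube::(real^'n) set))"
      using emeasure_lborel_cbox_finite[of "0::real^'n" 1] by (intro emeasure_eq_ennreal_measure) (simp add: less_top)
    also have "measure lborel (cube::(real^'n) set) = 1" using content_cbox_cart[OF ne] by simp
    finally show ?thesis by simp
  qed
  also have "1 * ennreal (1/3) = ennreal (1/3)" by simp
  finally have "(\<integral>\<^sup>+x. ennreal ((x $ a)^2) * indicator cube x \<partial>lborel) = ennreal (1/3)" .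
  moreover have "(\<integral>\<^sup>+x. ennreal ((x $ a)^2) * indicator cube x \<partial>lborel) = ennreal (integral cube (\<lambda>x::real^'n. (x $ a)^2))"
  proof (rule nn_integral_has_integral_lebesgue')
    have "continuous_on UNIV (\<lambda>x::real^'n. (x $ a)^2)" by (intro continuous_intros)
    then show "((\<lambda>x::real^'n. (x $ a)^2) has_integral integral cube (\<lambda>x::real^'n. (x $ a)^2)) cube"
      by (intro integrable_integral integrable_cube)
  qed simp
  moreover have "0 \<le> integral cube (\<lambda>x::real^'n. (x $ a)^2)"
  proof (rule integral_nonneg)
    have "continuous_on UNIV (\<lambda>x::real^'n. (x $ a)^2)" by (intro continuous_intros)
    then show "(\<lambda>x::real^'n. (x $ a)^2) integrable_on cube" by (rule integrable_cube)
  qed simp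
  ultimately show ?thesis by simp
qed


lemma P_const:
  assumes "1 \<le> l" "l \<le> CARD('n::finite) + 1"
  shows "P1 TYPE('n) l = P1 TYPE('n) 1"
  using assms
proof (induction l)
  case 0 then show ?case by simp
next
  case (Suc l)
  show ?case
  proof (cases "l = 0")
    case False
    have "P1 TYPE('n) (tr l l) = P1 TYPE('n) l" using Suc.prems False by (intro P1_swap) auto
    then show ?thesis using Suc False by (simp add: tr_def)
  qed simp
qed

lemma Q_diag:
  assumes "1 \<le> l" "l \<le> CARD('n::finite) + 1"
  shows "Q2 TYPE('n) l l = Q2 TYPE('n) 1 1"
  using assms
proof (induction l)
  case 0 then show ?case by simp
next
  case (Suc l)
  show ?case
  proof (cases "l = 0")
    case False
    have "Q2 TYPE('n) (tr l l) (tr l l) = Q2 TYPE('n) l l" using Suc.prems False by (intro Q2_swap) auto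
    then show ?thesis using Suc False by (simp add: tr_def)
  qed simp
qed

lemma Q_sym: "Q2 T l m = Q2 T m l"
  by (simp add: Q2_def mult.commute)

lemma Q_row:
  assumes "1 \<le> l" "l < m" "m \<le> CARD('n::finite) + 1"
  shows "Q2 TYPE('n) l m = Q2 TYPE('n) l (Suc l)"
  using assms
proof (induction m)
  case 0 then show ?case by simp
next
  case (Suc m)
  show ?case
  proof (cases "m = l")
    case False
    then have lm: "l < m" using Suc.prems by simp
    have "Q2 TYPE('n) (tr m l) (tr m m) = Q2 TYPE('n) l m" using Suc.prems lm by (intro Q2_swap) auto
    moreover have "tr m l = l" "tr m m = Suc m" using lm by (auto simp: tr_def)
    ultimately show ?thesis using Suc.IH Suc.prems lm by simp
  qed simp
qed

lemma Q_col:
  assumes "1 \<le> j" "j < m" "m \<le> CARD('n::finite) + 1"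
  shows "Q2 TYPE('n) m j = Q2 TYPE('n) m 1"
  using assms
proof (induction j)
  case 0 then show ?case by simp
next
  case (Suc j)
  show ?case
  proof (cases "j = 0")
    case False
    have "Q2 TYPE('n) (tr j m) (tr j j) = Q2 TYPE('n) m j" using Suc.prems False by (intro Q2_swap) auto
    moreover have "tr j m = m" "tr j j = Suc j" using Suc.prems by (auto simp: tr_def)
    ultimately show ?thesis using Suc.IH Suc.prems False by simp
  qed simp
qed

lemma Q_off:
  assumes "1 \<le> l" "l < m" "m \<le> CARD('n::finite) + 1"
  shows "Q2 TYPE('n) l m = Q2 TYPE('n) 1 2"
proof -
  have "Q2 TYPE('n) l m = Q2 TYPE('n) l (Suc l)" using assms by (rule Q_row)
  also have "\<dots> = Q2 TYPE('n) (Suc l) l" by (rule Q_sym)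
  also have "\<dots> = Q2 TYPE('n) (Suc l) 1" using assms by (intro Q_col) auto
  also have "\<dots> = Q2 TYPE('n) 1 (Suc l)" by (rule Q_sym)
  also have "\<dots> = Q2 TYPE('n) 1 2"
  proof (cases "l = 1")
    case False then show ?thesis using assms Q_row[where 'n='n, of 1 "Suc l"] by (simp add: numeral_2_eq_2)
  qed (simp add: numeral_2_eq_2)
  finally show ?thesis .
qed

lemma Q_val:
  assumes "1 \<le> l" "l \<le> CARD('n::finite) + 1" "1 \<le> m" "m \<le> CARD('n) + 1"
  shows "Q2 TYPE('n) l m = (if l = m then Q2 TYPE('n) 1 1 else Q2 TYPE('n) 1 2)"
proof -
  consider "l = m" | "l < m" | "m < l" by linarith
  then show ?thesis
  proof cases
    case 1 then show ?thesis using assms Q_diag by simp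
  next
    case 2 then show ?thesis using assms Q_off by simp
  next
    case 3
    then have "Q2 TYPE('n) m l = Q2 TYPE('n) 1 2" using assms Q_off[where 'n='n, of m l] by simp
    then show ?thesis using 3 Q_sym[of "TYPE('n)" l m] by simp
  qed
qed

lemma telescope: "(\<Sum>l=1..(m::nat). (g l - g (l - 1))) = g m - (g 0 :: real)"
  by (induction m) (simp_all add: atLeastAtMostSuc_conv)

lemma sum_sp: "(\<Sum>l=1..CARD('n::finite)+1. sp (x::real^'n) l) = 1"
  unfolding sp_def by (subst telescope) simp

lemma os_sum_sp: "os (x::real^'n::finite) i = (\<Sum>l=1..i. sp x l)"
  unfolding sp_def by (subst telescope) simp

lemma content_cube: "measure lborel (cube::(real^'n::finite) set) = 1"
proof -
  have "(0::real^'n) \<in> cube" by (simp add: in_cube)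
  then have ne: "(cube::(real^'n) set) \<noteq> {}" by blast
  show ?thesis using content_cbox_cart[OF ne] by simp
qed

lemma sum_if_eq:
  assumes "finite A" "l \<in> A"
  shows "(\<Sum>m\<in>A. if l = m then a else b) = a + (real (card A) - 1) * (b::real)"
proof -
  have "(\<Sum>m\<in>A. if l = m then a else b) = (if l = l then a else b) + (\<Sum>m\<in>A - {l}. if l = m then a else b)"
    using assms by (rule sum.remove)
  also have "(\<Sum>m\<in>A - {l}. if l = m then a else b) = (\<Sum>m\<in>A - {l}. b)"
    by (rule sum.cong) auto
  also have "\<dots> = (real (card A) - 1) * b"
  proof -
    have "0 < card A" using assms card_gt_0_iff by blast
    then show ?thesis using assms by (simp add: card_Diff_singleton of_nat_diff)
  qed
  finally show ?thesis by simp
qed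

lemma icube: "continuous_on UNIV \<phi> \<Longrightarrow> (\<phi> :: real^'n::finite \<Rightarrow> real) integrable_on cube"
  by (rule integrable_cube)

lemma I1: "(real CARD('n::finite) + 1) * P1 TYPE('n) 1 = 1"
proof -
  let ?N = "CARD('n)"
  have "(\<lambda>x::real^'n. \<Sum>l=1..?N+1. sp x l) = (\<lambda>x. 1)" by (rule ext, rule sum_sp)
  then have "1 = integral (cube::(real^'n) set) (\<lambda>x. \<Sum>l=1..?N+1. sp x l)"
    by (simp add: content_cube)
  also have "\<dots> = (\<Sum>l=1..?N+1. P1 TYPE('n) l)"
    unfolding P1_def by (rule integral_sum) (auto intro!: icube continuous_intros)
  also have "\<dots> = (\<Sum>l=1..?N+1. P1 TYPE('n) 1)"
  proof (rule sum.cong)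
    fix l assume "l \<in> {1..?N+1}"
    then show "P1 TYPE('n) l = P1 TYPE('n) 1" by (intro P_const) auto
  qed simp
  finally show ?thesis by (simp add: algebra_simps)
qed

lemma I2: "Q2 TYPE('n::finite) 1 1 + real CARD('n) * Q2 TYPE('n) 1 2 = P1 TYPE('n) 1"
proof -
  let ?N = "CARD('n)"
  have "(\<lambda>x::real^'n. \<Sum>m=1..?N+1. sp x 1 * sp x m) = (\<lambda>x. sp x 1)"
    by (rule ext) (simp only: sum_distrib_left[symmetric] sum_sp mult_1_right)
  then have "P1 TYPE('n) 1 = integral (cube::(real^'n) set) (\<lambda>x. \<Sum>m=1..?N+1. sp x 1 * sp x m)"
    unfolding P1_def by simp
  also have "\<dots> = (\<Sum>m=1..?N+1. Q2 TYPE('n) 1 m)"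
    unfolding Q2_def by (rule integral_sum) (auto intro!: icube continuous_intros)
  also have "\<dots> = (\<Sum>m=1..?N+1. if 1 = m then Q2 TYPE('n) 1 1 else Q2 TYPE('n) 1 2)"
  proof (rule sum.cong)
    fix m assume "m \<in> {1..?N+1}"
    then show "Q2 TYPE('n) 1 m = (if 1 = m then Q2 TYPE('n) 1 1 else Q2 TYPE('n) 1 2)" by (intro Q_val) auto
  qed simp
  also have "\<dots> = Q2 TYPE('n) 1 1 + real ?N * Q2 TYPE('n) 1 2"
    by (subst sum_if_eq) auto
  finally show ?thesis by simp
qed

lemma I4:
  assumes "i \<le> CARD('n::finite)"
  shows "integral (cube::(real^'n) set) (\<lambda>x. (os x i)^2) = real i * (Q2 TYPE('n) 1 1 + (real i - 1) * Q2 TYPE('n) 1 2)"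
proof -
  have "integral (cube::(real^'n) set) (\<lambda>x. (os x i)^2) =
      integral (cube::(real^'n) set) (\<lambda>x. \<Sum>l=1..i. \<Sum>m=1..i. sp x l * sp x m)"
    by (simp add: os_sum_sp[of _ i] power2_eq_square sum_product)
  also have "\<dots> = (\<Sum>l=1..i. integral (cube::(real^'n) set) (\<lambda>x. \<Sum>m=1..i. sp x l * sp x m))"
    by (rule integral_sum) (auto intro!: icube continuous_intros)
  also have "\<dots> = (\<Sum>l=1..i. \<Sum>m=1..i. Q2 TYPE('n) l m)"
    unfolding Q2_def by (intro sum.cong refl integral_sum) (auto intro!: icube continuous_intros)
  also have "\<dots> = (\<Sum>l=1..i. \<Sum>m=1..i. if l = m then Q2 TYPE('n) 1 1 else Q2 TYPE('n) 1 2)"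
    using assms by (intro sum.cong refl Q_val[where 'n='n]) auto
  also have "\<dots> = (\<Sum>l=1..i. Q2 TYPE('n) 1 1 + (real i - 1) * Q2 TYPE('n) 1 2)"
    by (intro sum.cong refl) (subst sum_if_eq, auto)
  finally show ?thesis by simp
qed

lemma I3: "(\<Sum>i=1..CARD('n::finite). integral (cube::(real^'n) set) (\<lambda>x. (os x i)^2)) = real CARD('n) / 3"
proof -
  let ?N = "CARD('n)"
  have fe: "(\<lambda>x::real^'n. \<Sum>i=1..?N. (os x i)^2) = (\<lambda>x. \<Sum>a\<in>UNIV. (x $ a)^2)"
    by (rule ext, rule os_sum)
  have "(\<Sum>i=1..?N. integral (cube::(real^'n) set) (\<lambda>x. (os x i)^2)) =
      integral (cube::(real^'n) set) (\<lambda>x. \<Sum>i=1..?N. (os x i)^2)"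
    by (rule integral_sum[symmetric]) (auto intro!: icube continuous_intros)
  also have "\<dots> = integral (cube::(real^'n) set) (\<lambda>x. \<Sum>a\<in>UNIV. (x $ a)^2)"
    by (simp only: fe)
  also have "\<dots> = (\<Sum>a\<in>UNIV. integral (cube::(real^'n) set) (\<lambda>x. (x $ a)^2))"
    by (rule integral_sum) (auto intro!: icube continuous_intros)
  also have "\<dots> = real ?N / 3" by (simp add: integral_coord_sq)
  finally show ?thesis .
qed

lemma sum_i: "(\<Sum>i=1..(N::nat). real i) = real N * (real N + 1) / 2"
  by (induction N) (simp_all add: atLeastAtMostSuc_conv field_simps)

lemma sum_i2: "(\<Sum>i=1..(N::nat). real i * (real i - 1)) = (real N + 1) * real N * (real N - 1) / 3"
  by (induction N) (simp_all add: atLeastAtMostSuc_conv field_simps)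

lemma q_diff: "Q2 TYPE('n::finite) 1 2 - Q2 TYPE('n) 1 1 = - 1 / ((real CARD('n) + 1) * (real CARD('n) + 2))"
proof -
  let ?N = "real CARD('n)"
  define q0 where "q0 = Q2 TYPE('n) 1 1"
  define q1 where "q1 = Q2 TYPE('n) 1 2"
  define p where "p = P1 TYPE('n) 1"
  have e1: "(?N + 1) * p = 1" using I1 by (simp add: p_def)
  have e2: "q0 + ?N * q1 = p" using I2 by (simp add: p_def q0_def q1_def)
  have "(\<Sum>i=1..CARD('n). real i * (q0 + (real i - 1) * q1)) = ?N / 3"
    using I3[where 'n='n] I4[where 'n='n] by (simp add: q0_def q1_def)
  moreover have "(\<Sum>i=1..CARD('n). real i * (q0 + (real i - 1) * q1)) =
      q0 * (\<Sum>i=1..CARD('n). real i) + q1 * (\<Sum>i=1..CARD('n). real i * (real i - 1))"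
  proof -
    have "(\<Sum>i=1..CARD('n). real i * (q0 + (real i - 1) * q1)) = (\<Sum>i=1..CARD('n). q0 * real i + q1 * (real i * (real i - 1)))"
      by (rule sum.cong) (simp_all add: algebra_simps)
    also have "\<dots> = q0 * (\<Sum>i=1..CARD('n). real i) + q1 * (\<Sum>i=1..CARD('n). real i * (real i - 1))"
      by (simp add: sum.distrib sum_distrib_left)
    finally show ?thesis .
  qed
  ultimately have "q0 * (\<Sum>i=1..CARD('n). real i) + q1 * (\<Sum>i=1..CARD('n). real i * (real i - 1)) = ?N / 3"
    by simp
  then have e3: "q0 * (?N * (?N + 1) / 2) + q1 * ((?N + 1) * ?N * (?N - 1) / 3) = ?N / 3"
    unfolding sum_i sum_i2 .
  have Npos: "?N > 0" by simp
  have h: "q0 * (?N + 1) = 1 - ?N * (?N + 1) * q1"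
  proof -
    have "q0 * (?N + 1) = (?N + 1) * (q0 + ?N * q1) - ?N * (?N + 1) * q1" by (simp add: algebra_simps)
    then show ?thesis using e1 e2 by simp
  qed
  have e3': "3 * ?N * (q0 * (?N + 1)) + 2 * q1 * ((?N + 1) * ?N * (?N - 1)) = 2 * ?N"
    using e3 by (simp add: field_simps)
  then have "3 * ?N * (1 - ?N * (?N + 1) * q1) + 2 * q1 * ((?N + 1) * ?N * (?N - 1)) = 2 * ?N"
    by (simp only: h)
  then have "q1 * (?N * (?N + 1) * (?N + 2)) = ?N" by (simp add: algebra_simps)
  then have "?N * (q1 * ((?N + 1) * (?N + 2)) - 1) = 0" by (simp add: algebra_simps)
  then have "q1 * ((?N + 1) * (?N + 2)) = 1" using Npos by simp
  then have q1: "q1 = 1 / ((?N + 1) * (?N + 2))"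
    by (simp add: eq_divide_eq add_pos_pos)
  have a1: "q1 - q0 = (?N + 1) * q1 - p" using e2 by (simp add: algebra_simps)
  have a2: "(?N + 1) * q1 = 1 / (?N + 2)"
  proof -
    have "(?N + 1) * q1 = (?N + 1) / ((?N + 1) * (?N + 2))" by (simp add: q1)
    also have "\<dots> = 1 / (?N + 2)" using Npos by (intro nonzero_divide_mult_cancel_left) simp
    finally show ?thesis .
  qed
  have a3: "p = 1 / (?N + 1)" using e1 Npos by (simp add: field_simps)
  have a4: "1 / (?N + 2) - 1 / (?N + 1) = - 1 / ((?N + 1) * (?N + 2))" using Npos by (simp add: field_simps)
  show ?thesis using a1 a2 a3 a4 unfolding q0_def[symmetric] q1_def[symmetric] by simp
qed

lemma lap_sp: "1 \<le> k \<Longrightarrow> os (x::real^'n::finite) (k+1) - 2 * os x k + os x (k-1) = sp x (Suc k) - sp x k"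
  by (simp add: sp_def)

lemma M0:
  assumes "1 \<le> k" "k \<le> CARD('n::finite)"
  shows "integral (cube::(real^'n) set) (\<lambda>x. os x (k+1) - 2 * os x k + os x (k-1)) = 0"
proof -
  have "integral (cube::(real^'n) set) (\<lambda>x. os x (k+1) - 2 * os x k + os x (k-1)) =
        integral (cube::(real^'n) set) (\<lambda>x. sp x (Suc k) - sp x k)"
  proof -
    have "(\<lambda>x::real^'n. os x (k+1) - 2 * os x k + os x (k-1)) = (\<lambda>x. sp x (Suc k) - sp x k)"
      by (rule ext, rule lap_sp[OF assms(1)])
    then show ?thesis by simp
  qed
  also have "\<dots> = P1 TYPE('n) (Suc k) - P1 TYPE('n) k"
    unfolding P1_def by (rule integral_diff) (auto intro!: icube continuous_intros)
  also have "\<dots> = 0" using assms P_const[where 'n='n, of "Suc k"] P_const[where 'n='n, of k] by simp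
  finally show ?thesis .
qed

lemma M1:
  assumes j: "1 \<le> j" "j \<le> CARD('n::finite)" and k: "1 \<le> k" "k \<le> CARD('n)"
  shows "integral (cube::(real^'n) set) (\<lambda>x. os x j * (os x (k+1) - 2 * os x k + os x (k-1))) =
    (if j = k then - 1 / ((real CARD('n) + 1) * (real CARD('n) + 2)) else 0)"
proof -
  let ?q0 = "Q2 TYPE('n) 1 1" and ?q1 = "Q2 TYPE('n) 1 2"
  have "integral (cube::(real^'n) set) (\<lambda>x. os x j * (os x (k+1) - 2 * os x k + os x (k-1))) =
        integral (cube::(real^'n) set) (\<lambda>x. \<Sum>l=1..j. sp x l * sp x (Suc k) - sp x l * sp x k)"
  proof -
    have "(\<lambda>x::real^'n. os x j * (os x (k+1) - 2 * os x k + os x (k-1))) =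
        (\<lambda>x. \<Sum>l=1..j. sp x l * sp x (Suc k) - sp x l * sp x k)"
    proof
      fix x :: "real^'n"
      have e: "os x j = (\<Sum>l=1..j. sp x l)" by (rule os_sum_sp)
      show "os x j * (os x (k+1) - 2 * os x k + os x (k-1)) = (\<Sum>l=1..j. sp x l * sp x (Suc k) - sp x l * sp x k)"
        unfolding lap_sp[OF k(1)] e sum_distrib_right right_diff_distrib by (simp add: sum_subtractf)
    qed
    then show ?thesis by simp
  qed
  also have "\<dots> = (\<Sum>l=1..j. integral (cube::(real^'n) set) (\<lambda>x. sp x l * sp x (Suc k) - sp x l * sp x k))"
    by (rule integral_sum) (auto intro!: icube continuous_intros)
  also have "\<dots> = (\<Sum>l=1..j. Q2 TYPE('n) l (Suc k) - Q2 TYPE('n) l k)"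
    unfolding Q2_def by (intro sum.cong refl integral_diff) (auto intro!: icube continuous_intros)
  also have "\<dots> = (\<Sum>l=1..j. (if l = Suc k then ?q0 - ?q1 else 0) + (if l = k then ?q1 - ?q0 else 0))"
  proof (rule sum.cong)
    fix l assume l: "l \<in> {1..j}"
    have "Q2 TYPE('n) l (Suc k) = (if l = Suc k then ?q0 else ?q1)" using l j k by (intro Q_val) auto
    moreover have "Q2 TYPE('n) l k = (if l = k then ?q0 else ?q1)" using l j k by (intro Q_val) auto
    ultimately show "Q2 TYPE('n) l (Suc k) - Q2 TYPE('n) l k =
      (if l = Suc k then ?q0 - ?q1 else 0) + (if l = k then ?q1 - ?q0 else 0)" by auto
  qed simp
  also have "\<dots> = (if Suc k \<in> {1..j} then ?q0 - ?q1 else 0) + (if k \<in> {1..j} then ?q1 - ?q0 else 0)"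
    by (simp add: sum.distrib)
  also have "\<dots> = (if j = k then ?q1 - ?q0 else 0)" using j k by auto
  also have "\<dots> = (if j = k then - 1 / ((real CARD('n) + 1) * (real CARD('n) + 2)) else 0)"
    using q_diff[where 'n='n] by simp
  finally show ?thesis .
qed


lemma icont: "continuous_on cube \<phi> \<Longrightarrow> (\<phi> :: real^'n::finite \<Rightarrow> real) integrable_on cube"
  by (rule integrable_continuous)

lemma pv_cube: "\<pi> permutes (UNIV::'n::finite set) \<Longrightarrow> x \<in> cube \<Longrightarrow> pv \<pi> (x::real^'n) \<in> cube"
  by (simp add: in_cube)

lemma cont_f_pv:
  assumes "continuous_on cube f" "\<pi> permutes (UNIV::'n::finite set)"
  shows "continuous_on (cube::(real^'n) set) (\<lambda>x. f (pv \<pi> x))"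
proof (rule continuous_on_compose2[OF assms(1) pv_continuous])
  show "pv \<pi> ` cube \<subseteq> cube" using pv_cube[OF assms(2)] by blast
qed

lemma sym_integral:
  fixes f h :: "real^'n::finite \<Rightarrow> real"
  assumes cf: "continuous_on cube f" and ch: "continuous_on UNIV h"
    and hs: "\<And>\<pi> x. \<pi> permutes (UNIV::'n set) \<Longrightarrow> h (pv \<pi> x) = h x"
  shows "integral cube (\<lambda>x. Sym f x * h x) = integral cube (\<lambda>x. f x * h x)"
proof -
  let ?P = "{\<pi>. \<pi> permutes (UNIV::'n set)}"
  let ?N = "CARD('n)"
  have cardP: "card ?P = fact ?N" by (rule card_permutations) auto
  have chc: "continuous_on cube h" using ch continuous_on_subset by blast
  have int1: "(\<lambda>x. f (pv \<pi> x) * h x) integrable_on cube" if "\<pi> \<in> ?P" for \<pi>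
    using that by (intro icont continuous_on_mult cont_f_pv[OF cf] chc) auto
  have intfh: "(\<lambda>x. f x * h x) integrable_on cube" by (intro icont continuous_on_mult cf chc)
  have "integral cube (\<lambda>x. Sym f x * h x) = integral cube (\<lambda>x. (1 / fact ?N) * (\<Sum>\<pi>\<in>?P. f (pv \<pi> x) * h x))"
    by (simp add: Sym_def pv_def[abs_def] sum_distrib_right)
  also have "\<dots> = (1 / fact ?N) * integral cube (\<lambda>x. \<Sum>\<pi>\<in>?P. f (pv \<pi> x) * h x)"
    by simp
  also have "integral cube (\<lambda>x. \<Sum>\<pi>\<in>?P. f (pv \<pi> x) * h x) = (\<Sum>\<pi>\<in>?P. integral cube (\<lambda>x. f (pv \<pi> x) * h x))"
    by (rule integral_sum) (auto intro: int1)
  also have "\<dots> = (\<Sum>\<pi>\<in>?P. integral cube (\<lambda>x. f x * h x))"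
  proof (rule sum.cong)
    fix \<pi> assume p: "\<pi> \<in> ?P"
    have "integral cube (\<lambda>x. f (pv \<pi> x) * h x) = integral cube (\<lambda>x. f (pv \<pi> x) * h (pv \<pi> x))"
      using hs p by simp
    also have "\<dots> = integral cube (\<lambda>x. f x * h x)"
      using integral_pv[of \<pi> "\<lambda>x. f x * h x"] p intfh by simp
    finally show "integral cube (\<lambda>x. f (pv \<pi> x) * h x) = integral cube (\<lambda>x. f x * h x)" .
  qed simp
  also have "(1 / fact ?N) * (\<Sum>\<pi>\<in>?P. integral cube (\<lambda>x. f x * h x)) = integral cube (\<lambda>x. f x * h x)"
    using cardP by simp
  finally show ?thesis .
qed

abbreviation (input) lap :: "real^'n::finite \<Rightarrow> nat \<Rightarrow> real" where
  "lap x k \<equiv> os x (k+1) - 2 * os x k + os x (k-1)"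

lemma span_lap:
  assumes k: "1 \<le> k" "k \<le> CARD('n::finite)"
  shows "integral (cube::(real^'n) set) (\<lambda>x. (c0 + (\<Sum>i=1..CARD('n). e i * os x i)) * lap x k) =
    - e k / ((real CARD('n) + 1) * (real CARD('n) + 2))"
proof -
  let ?N = "CARD('n)"
  let ?D = "(real ?N + 1) * (real ?N + 2)"
  have "integral (cube::(real^'n) set) (\<lambda>x. (c0 + (\<Sum>i=1..?N. e i * os x i)) * lap x k) =
        integral (cube::(real^'n) set) (\<lambda>x. c0 * lap x k + (\<Sum>i=1..?N. e i * (os x i * lap x k)))"
  proof -
    have "(\<lambda>x::real^'n. (c0 + (\<Sum>i=1..?N. e i * os x i)) * lap x k) =
        (\<lambda>x. c0 * lap x k + (\<Sum>i=1..?N. e i * (os x i * lap x k)))"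
      by (rule ext) (simp only: distrib_right sum_distrib_right mult.assoc)
    then show ?thesis by simp
  qed
  also have "\<dots> = integral (cube::(real^'n) set) (\<lambda>x. c0 * lap x k) +
      integral (cube::(real^'n) set) (\<lambda>x. \<Sum>i=1..?N. e i * (os x i * lap x k))"
    by (rule integral_add) (auto intro!: icube continuous_intros)
  also have "integral (cube::(real^'n) set) (\<lambda>x. c0 * lap x k) = c0 * integral (cube::(real^'n) set) (\<lambda>x. lap x k)"
    by simp
  also have "integral (cube::(real^'n) set) (\<lambda>x. lap x k) = 0" using M0[OF k] by simp
  also have "integral (cube::(real^'n) set) (\<lambda>x. \<Sum>i=1..?N. e i * (os x i * lap x k)) =
      (\<Sum>i=1..?N. integral (cube::(real^'n) set) (\<lambda>x. e i * (os x i * lap x k)))"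
    by (rule integral_sum) (auto intro!: icube continuous_intros)
  also have "\<dots> = (\<Sum>i=1..?N. e i * (if i = k then - 1 / ?D else 0))"
  proof (rule sum.cong)
    fix i assume "i \<in> {1..?N}"
    then show "integral (cube::(real^'n) set) (\<lambda>x. e i * (os x i * lap x k)) = e i * (if i = k then - 1 / ?D else 0)"
      using M1[where 'n='n, of i k] k by simp
  qed simp
  also have "\<dots> = - e k / ?D" using k by (simp add: if_distrib[of "\<lambda>v. e _ * v"] sum.delta' cong: if_cong)
  finally show ?thesis by simp
qed

lemma os_pv: "\<pi> permutes (UNIV::'n::finite set) \<Longrightarrow> os (pv \<pi> (x::real^'n)) i = os x i"
  unfolding pv_def by (rule os_perm)

lemma L2_split:
  fixes f :: "real^'n::finite \<Rightarrow> real"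
  assumes cf: "continuous_on cube f"
    and symG: "\<forall>x\<in>cube. Sym f x = f 0 + (\<Sum>i=1..CARD('n). a i * os x i)"
  shows "L2_dist_sq f (\<lambda>x. c0 + (\<Sum>i=1..CARD('n). c i * os x i)) =
     L2_dist_sq f (\<lambda>x. f 0 + (\<Sum>i=1..CARD('n). a i * os x i)) +
     integral cube (\<lambda>x::real^'n. ((f 0 - c0) + (\<Sum>i=1..CARD('n). (a i - c i) * os x i))^2)"
proof -
  let ?N = "CARD('n)"
  define G where "G x = f 0 + (\<Sum>i=1..?N. a i * os x i)" for x :: "real^'n"
  define h where "h x = c0 + (\<Sum>i=1..?N. c i * os x i)" for x :: "real^'n"
  define u where "u x = (f 0 - c0) + (\<Sum>i=1..?N. (a i - c i) * os x i)" for x :: "real^'n"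
  have u: "u x = G x - h x" for x
    by (simp add: u_def G_def h_def algebra_simps sum_subtractf)
  have cG: "continuous_on UNIV G" unfolding G_def by (intro continuous_intros)
  have cu: "continuous_on UNIV u" unfolding u_def by (intro continuous_intros)
  have cGc: "continuous_on cube G" and cuc: "continuous_on cube u"
    using cG cu continuous_on_subset by blast+
  have us: "u (pv \<pi> x) = u x" if "\<pi> permutes UNIV" for \<pi> x
    using that by (simp add: u_def os_pv)
  have cross: "integral cube (\<lambda>x. (f x - G x) * u x) = 0"
  proof -
    have "integral cube (\<lambda>x. (f x - G x) * u x) = integral cube (\<lambda>x. f x * u x) - integral cube (\<lambda>x. G x * u x)"
      unfolding left_diff_distrib by (rule integral_diff) (intro icont continuous_intros cf cGc cuc)+
    also have "integral cube (\<lambda>x. f x * u x) = integral cube (\<lambda>x. Sym f x * u x)"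
      by (rule sym_integral[OF cf cu us, symmetric])
    also have "\<dots> = integral cube (\<lambda>x. G x * u x)"
      using symG by (intro integral_cong) (simp add: G_def)
    finally show ?thesis by simp
  qed
  have "L2_dist_sq f h = integral cube (\<lambda>x. (f x - G x)^2 + 2 * ((f x - G x) * u x) + (u x)^2)"
    unfolding L2_dist_sq_def by (intro integral_cong) (simp add: u power2_eq_square algebra_simps)
  also have "\<dots> = integral cube (\<lambda>x. (f x - G x)^2 + 2 * ((f x - G x) * u x)) + integral cube (\<lambda>x. (u x)^2)"
    by (rule integral_add) (intro icont continuous_intros cf cGc cuc)+
  also have "integral cube (\<lambda>x. (f x - G x)^2 + 2 * ((f x - G x) * u x)) =
      integral cube (\<lambda>x. (f x - G x)^2) + integral cube (\<lambda>x. 2 * ((f x - G x) * u x))"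
    by (rule integral_add) (intro icont continuous_intros cf cGc cuc)+
  also have "integral cube (\<lambda>x. 2 * ((f x - G x) * u x)) = 0"
    using cross by simp
  finally show ?thesis by (simp add: L2_dist_sq_def G_def h_def u_def)
qed

theorem proposition23:
  fixes f :: "real^'n::finite \<Rightarrow> real"
  assumes "lovasz_extension f"
  shows "(\<forall>x\<in>cbox 0 1. f_L f x = Sym f x) \<and>
         (\<forall>x\<in>cbox 0 1. Sym f x = f 0 + (\<Sum>i=1..CARD('n). influence f i * os x i))"
proof -
  let ?N = "CARD('n)"
  let ?D = "(real ?N + 1) * (real ?N + 2)"
  have Dpos: "?D > 0" by simp
  have cf: "continuous_on cube f" using assms by (simp add: lovasz_extension_def)
  obtain d where d: "\<forall>x\<in>cube. Sym f x = f 0 + (\<Sum>i=1..?N. d i * os x i)"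
    using Sym_formula[OF assms] by blast
  have lapc: "continuous_on UNIV (\<lambda>x::real^'n. lap x k)" for k by (intro continuous_intros)
  have laps: "lap (pv \<pi> x) k = lap x k" if "\<pi> permutes UNIV" for \<pi> x k
    using that by (simp add: os_pv)
  have infl: "influence f k = d k" if k: "1 \<le> k" "k \<le> ?N" for k
  proof -
    have "integral cube (\<lambda>x. f x * lap x k) = integral cube (\<lambda>x. Sym f x * lap x k)"
      by (rule sym_integral[OF cf lapc laps, symmetric])
    also have "\<dots> = integral cube (\<lambda>x::real^'n. (f 0 + (\<Sum>i=1..?N. d i * os x i)) * lap x k)"
      using d by (intro integral_cong) simp
    also have "\<dots> = - d k / ?D" by (rule span_lap[OF k])
    finally have "integral cube (\<lambda>x. f x * lap x k) = - d k / ?D" .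
    then show ?thesis unfolding influence_def using Dpos by (simp add: field_simps)
  qed
  have symG: "\<forall>x\<in>cube. Sym f x = f 0 + (\<Sum>i=1..?N. influence f i * os x i)"
  proof
    fix x :: "real^'n" assume "x \<in> cube"
    then have "Sym f x = f 0 + (\<Sum>i=1..?N. d i * os x i)" using d by blast
    also have "(\<Sum>i=1..?N. d i * os x i) = (\<Sum>i=1..?N. influence f i * os x i)"
      by (rule sum.cong) (auto simp: infl)
    finally show "Sym f x = f 0 + (\<Sum>i=1..?N. influence f i * os x i)" .
  qed
  define G where "G = (\<lambda>x::real^'n. f 0 + (\<Sum>i=1..?N. influence f i * os x i))"
  define a where "a i = influence f i" for i
  have symG': "\<forall>x\<in>cube. Sym f x = f 0 + (\<Sum>i=1..?N. a i * os x i)" using symG by (simp add: a_def)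
  have Gspan: "G \<in> os_span"
  proof -
    define c where "c i = (if i = 0 then f 0 else influence f i)" for i
    have "G = (\<lambda>x. c 0 + (\<Sum>i=1..?N. c i * os x i))"
      unfolding G_def c_def by (intro ext arg_cong2[where f="(+)"] refl sum.cong) auto
    then show ?thesis unfolding os_span_def by blast
  qed
  have split: "L2_dist_sq f (\<lambda>x. c 0 + (\<Sum>i=1..?N. c i * os x i)) =
     L2_dist_sq f G + integral cube (\<lambda>x::real^'n. ((f 0 - c 0) + (\<Sum>i=1..?N. (a i - c i) * os x i))^2)" for c
    using L2_split[OF cf symG', of "c 0" c] by (simp add: G_def a_def)
  have sqnn: "0 \<le> integral cube (\<lambda>x::real^'n. ((f 0 - c 0) + (\<Sum>i=1..?N. (a i - c i) * os x i))^2)" for c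
    by (rule integral_nonneg) (auto intro!: icube continuous_intros)
  have min: "L2_dist_sq f G \<le> L2_dist_sq f h" if hs: "h \<in> os_span" for h
  proof -
    obtain c where c: "h = (\<lambda>x. c 0 + (\<Sum>i=1..?N. c i * os x i))" using hs unfolding os_span_def by blast
    show ?thesis using split[of c] sqnn[of c] c by simp
  qed
  have uniq: "g = G" if g: "g \<in> os_span" "\<forall>h\<in>os_span. L2_dist_sq f g \<le> L2_dist_sq f h" for g
  proof -
    obtain c where c: "g = (\<lambda>x. c 0 + (\<Sum>i=1..?N. c i * os x i))" using g(1) unfolding os_span_def by blast
    define e where "e i = a i - c i" for i
    define u where "u x = (f 0 - c 0) + (\<Sum>i=1..?N. e i * os x i)" for x :: "real^'n"
    have "L2_dist_sq f g \<le> L2_dist_sq f G" using g(2) Gspan by blast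
    then have "integral cube (\<lambda>x. (u x)^2) \<le> 0" using split[of c] c by (simp add: u_def e_def)
    moreover have "0 \<le> integral cube (\<lambda>x. (u x)^2)" using sqnn[of c] by (simp add: u_def e_def)
    ultimately have i0: "integral cube (\<lambda>x. (u x)^2) = 0" by simp
    have cu: "continuous_on UNIV u" unfolding u_def by (intro continuous_intros)
    have "((\<lambda>x. (u x)^2) has_integral 0) cube"
      using i0 integrable_integral[OF icube[of "\<lambda>x. (u x)^2"]] cu by (simp add: continuous_intros)
    moreover have "box (0::real^'n) 1 \<noteq> {}"
    proof -
      have "((\<chi> i. 1/2) :: real^'n) \<in> box (0::real^'n) 1" by (simp add: mem_box_cart)
      then show ?thesis by blast
    qed
    ultimately have u0: "(u x)^2 = 0" if "x \<in> cube" for x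
      using that by (intro has_integral_0_cbox_imp_0[of 0 1 "\<lambda>x. (u x)^2"]) (auto intro!: continuous_intros cu[THEN continuous_on_subset])
    have ek: "e k = 0" if k: "1 \<le> k" "k \<le> ?N" for k
    proof -
      have "integral cube (\<lambda>x. u x * lap x k) = integral cube (\<lambda>x::real^'n. 0)"
        using u0 by (intro integral_cong) simp
      then have "integral cube (\<lambda>x. u x * lap x k) = 0" by simp
      moreover have "integral cube (\<lambda>x. u x * lap x k) = - e k / ?D"
        unfolding u_def by (rule span_lap[OF k])
      ultimately show ?thesis using Dpos by simp
    qed
    have "u 0 = f 0 - c 0" unfolding u_def using ek by simp
    moreover have "u 0 = 0" using u0[of 0] by (simp add: in_cube)
    ultimately have c0: "c 0 = f 0" by simp
    show ?thesis
      unfolding c G_def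
    proof (intro ext arg_cong2[where f="(+)"] sum.cong refl)
      show "c 0 = f 0" by (rule c0)
      fix x i assume "i \<in> {1..?N}"
      then show "c i * os x i = influence f i * os x i" using ek[of i] by (simp add: e_def a_def)
    qed
  qed
  have fL: "f_L f = G"
    unfolding f_L_def
  proof (rule the_equality)
    show "G \<in> os_span \<and> (\<forall>h\<in>os_span. L2_dist_sq f G \<le> L2_dist_sq f h)" using Gspan min by blast
    show "\<And>g. g \<in> os_span \<and> (\<forall>h\<in>os_span. L2_dist_sq f g \<le> L2_dist_sq f h) \<Longrightarrow> g = G"
      using uniq by blast
  qed
  show ?thesis
  proof
    show "\<forall>x\<in>cbox 0 1. f_L f x = Sym f x" using fL symG by (simp add: G_def)
    show "\<forall>x\<in>cbox 0 1. Sym f x = f 0 + (\<Sum>i=1..?N. influence f i * os x i)" by (rule symG)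
  qed
qed


end
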